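(* Let $X,Y$ be bounded normal operators on a complex Hilbert space $\mathcal H$ with $e^X=e^Y$. Suppose $\sigma(X)$ and $\sigma(Y)$ are contained in $\{x+iy: x\in\mathbb{R},\ y\in[(2k_0+1)\pi,(2k_1+1)\pi]\}$ for some integers $k_0,k_1$. For $k\in\mathbb{Z}$ let $P_{2k+1}=E_X(\{x+iy: y\in((2k-1)\pi,(2k+1)\pi)\})$, $Q_{2k+1}=E_Y(\{x+iy: y\in((2k-1)\pi,(2k+1)\pi)\})$, $E_{2k+1}=E_X(\{x+iy: y=(2k+1)\pi\})$, $F_{2k+1}=E_Y(\{x+iy: y=(2k+1)\pi\})$ (with $x,y$ real). Then \[ X-Y=\sum_{k=k_0}^{k_1}\Big(2k\pi i\,(P_{2k+1}-Q_{2k+1})+(2k+1)\pi i\,(E_{2k+1}-F_{2k+1})\Big). \]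
   Context: $E_X,E_Y$ are the spectral measures of $X,Y$, extended to all Borel subsets of $\mathbb{C}$ by $E_X(\Omega)=E_X(\Omega\cap\sigma(X))$. *)

theory Defs
  imports "HOL-Analysis.Analysis"
begin

class complex_vector = real_vector +
  fixes scaleC :: "complex \<Rightarrow> 'a \<Rightarrow> 'a"  (infixr "*\<^sub>C" 75)
  assumes scaleC_add_right: "a *\<^sub>C (x + y) = a *\<^sub>C x + a *\<^sub>C y"
    and scaleC_add_left: "(a + b) *\<^sub>C x = a *\<^sub>C x + b *\<^sub>C x"
    and scaleC_scaleC: "a *\<^sub>C (b *\<^sub>C x) = (a * b) *\<^sub>C x"
    and scaleC_one: "1 *\<^sub>C x = x"
    and scaleR_scaleC: "r *\<^sub>R x = complex_of_real r *\<^sub>C x"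

text \<open>Inner product, conjugate-linear in the first and linear in the second argument.\<close>
class complex_inner = complex_vector + real_normed_vector +
  fixes cinner :: "'a \<Rightarrow> 'a \<Rightarrow> complex"
  assumes cinner_commute: "cinner x y = cnj (cinner y x)"
    and cinner_add_right: "cinner x (y + z) = cinner x y + cinner x z"
    and cinner_scaleC_right: "cinner x (a *\<^sub>C y) = a * cinner x y"
    and cinner_self_real_nonneg: "Im (cinner x x) = 0 \<and> Re (cinner x x) \<ge> 0"
    and cinner_self_eq_zero: "cinner x x = 0 \<longleftrightarrow> x = 0"
    and norm_eq_sqrt_cinner: "norm x = sqrt (Re (cinner x x))"

class chilbert_space = complex_inner + complete_space

definition is_clinear :: "('a::complex_vector \<Rightarrow> 'b::complex_vector) \<Rightarrow> bool" where
  "is_clinear T \<longleftrightarrow> (\<forall>x y. T (x + y) = T x + T y) \<and> (\<forall>c x. T (c *\<^sub>C x) = c *\<^sub>C T x)"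

definition is_bounded_clinear :: "('a::complex_inner \<Rightarrow> 'b::complex_inner) \<Rightarrow> bool" where
  "is_bounded_clinear T \<longleftrightarrow> is_clinear T \<and> (\<exists>K. \<forall>x. norm (T x) \<le> norm x * K)"

definition is_adjoint :: "('a::complex_inner \<Rightarrow> 'a) \<Rightarrow> ('a \<Rightarrow> 'a) \<Rightarrow> bool" where
  "is_adjoint T S \<longleftrightarrow> (\<forall>x y. cinner (T x) y = cinner x (S y))"

definition is_normal_op :: "('a::complex_inner \<Rightarrow> 'a) \<Rightarrow> bool" where
  "is_normal_op T \<longleftrightarrow> is_bounded_clinear T \<and>
     (\<exists>S. is_bounded_clinear S \<and> is_adjoint T S \<and> T \<circ> S = S \<circ> T)"

definition is_orth_proj :: "('a::complex_inner \<Rightarrow> 'a) \<Rightarrow> bool" where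
  "is_orth_proj P \<longleftrightarrow> is_bounded_clinear P \<and> P \<circ> P = P \<and> is_adjoint P P"

definition op_spectrum :: "('a::complex_inner \<Rightarrow> 'a) \<Rightarrow> complex set" where
  "op_spectrum T = {l. \<not> (\<exists>S. is_bounded_clinear S \<and>
       (\<forall>x. S (T x - l *\<^sub>C x) = x) \<and> (\<forall>x. T (S x) - l *\<^sub>C S x = x))}"

text \<open>Operator exponential \<open>e^T = \<Sum> T^n / n!\<close> (for bounded T the series converges
  in operator norm, hence pointwise to the same limit).\<close>
definition op_exp :: "('a::complex_inner \<Rightarrow> 'a) \<Rightarrow> 'a \<Rightarrow> 'a" where
  "op_exp T = (\<lambda>x. \<Sum>n. (1 / fact n) *\<^sub>R (T ^^ n) x)"

text \<open>The scalar measure \<open>\<mu>_x(A) = \<langle>E(A)x, x\<rangle> = \<parallel>E(A)x\<parallel>^2\<close> on the Borel sets of \<open>\<complex>\<close>.\<close>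
definition spectral_mu :: "(complex set \<Rightarrow> 'a \<Rightarrow> 'a::complex_inner) \<Rightarrow> 'a \<Rightarrow> complex measure" where
  "spectral_mu E x = measure_of UNIV (sets borel) (\<lambda>A. ennreal ((norm (E A x))\<^sup>2))"

text \<open>\<open>E\<close> is the spectral measure (resolution of the identity) of the normal operator \<open>T\<close>:
  a projection-valued, strongly countably additive measure on the Borel sets of \<open>\<complex>\<close>,
  concentrated on \<open>\<sigma>(T)\<close>, with \<open>T = \<integral> z dE(z)\<close>.  The last condition is stated via the
  quadratic forms \<open>\<langle>x, T x\<rangle> = \<integral> z d\<mu>_x(z)\<close>, which determine \<open>T\<close> by polarization.\<close>
definition spectral_measure_of :: "('a::chilbert_space \<Rightarrow> 'a) \<Rightarrow> (complex set \<Rightarrow> 'a \<Rightarrow> 'a) \<Rightarrow> bool" where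
  "spectral_measure_of T E \<longleftrightarrow>
     (\<forall>A\<in>sets borel. is_orth_proj (E A)) \<and>
     E {} = (\<lambda>x. 0) \<and> E UNIV = id \<and>
     (\<forall>A\<in>sets borel. \<forall>B\<in>sets borel. E (A \<inter> B) = E A \<circ> E B) \<and>
     (\<forall>F::nat \<Rightarrow> complex set. range F \<subseteq> sets borel \<longrightarrow> disjoint_family F \<longrightarrow>
        (\<forall>x. (\<lambda>n. E (F n) x) sums E (\<Union>n. F n) x)) \<and>
     E (- op_spectrum T) = (\<lambda>x. 0) \<and>
     (\<forall>x. cinner x (T x) = integral\<^sup>L (spectral_mu E x) (\<lambda>z. z))"

end

theory Submission
  imports Defs
begin

lemma scaleC_zero_right[simp]: "a *\<^sub>C (0::'a::complex_vector) = 0"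
proof -
  have "a *\<^sub>C 0 + a *\<^sub>C 0 = a *\<^sub>C (0::'a) + 0" by (simp flip: scaleC_add_right)
  then show ?thesis by simp
qed
lemma scaleC_zero_left[simp]: "0 *\<^sub>C (x::'a::complex_vector) = 0"
proof -
  have "0 *\<^sub>C x + 0 *\<^sub>C x = 0 *\<^sub>C x + 0" by (simp flip: scaleC_add_left)
  then show ?thesis by simp
qed
lemma scaleC_minus_left: "(- a) *\<^sub>C (x::'a::complex_vector) = - (a *\<^sub>C x)"
proof -
  have "(- a) *\<^sub>C x + a *\<^sub>C x = 0" by (simp flip: scaleC_add_left)
  then show ?thesis by (simp add: eq_neg_iff_add_eq_0)
qed
lemma scaleC_minus_right: "a *\<^sub>C (- x::'a::complex_vector) = - (a *\<^sub>C x)"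
proof -
  have "a *\<^sub>C (- x) + a *\<^sub>C x = 0" by (simp flip: scaleC_add_right)
  then show ?thesis by (simp add: eq_neg_iff_add_eq_0)
qed
lemma scaleC_diff_right: "a *\<^sub>C (x - y::'a::complex_vector) = a *\<^sub>C x - a *\<^sub>C y"
proof -
  have "a *\<^sub>C (x - y) + a *\<^sub>C y = a *\<^sub>C x" by (simp flip: scaleC_add_right)
  then show ?thesis by (simp add: eq_diff_eq)
qed
lemma scaleC_diff_left: "(a - b) *\<^sub>C (x::'a::complex_vector) = a *\<^sub>C x - b *\<^sub>C x"
proof -
  have "(a - b) *\<^sub>C x + b *\<^sub>C x = a *\<^sub>C x" by (simp flip: scaleC_add_left)
  then show ?thesis by (simp add: eq_diff_eq)
qed
lemma scaleC_sum_right: "a *\<^sub>C (\<Sum>i\<in>I. f i) = (\<Sum>i\<in>I. a *\<^sub>C (f i::'a::complex_vector))"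
  by (induction I rule: infinite_finite_induct) (auto simp: scaleC_add_right)
lemma scaleC_sum_left: "(\<Sum>i\<in>I. f i) *\<^sub>C (x::'a::complex_vector) = (\<Sum>i\<in>I. f i *\<^sub>C x)"
  by (induction I rule: infinite_finite_induct) (auto simp: scaleC_add_left)
lemma scaleC_of_real: "complex_of_real r *\<^sub>C (x::'a::complex_vector) = r *\<^sub>R x"
  by (simp add: scaleR_scaleC)

lemma cinner_add_left: "cinner (x + y) (z::'a::complex_inner) = cinner x z + cinner y z"
  by (metis cinner_commute cinner_add_right complex_cnj_add)
lemma cinner_scaleC_left: "cinner (a *\<^sub>C x) (y::'a::complex_inner) = cnj a * cinner x y"
  by (metis cinner_commute cinner_scaleC_right complex_cnj_mult)
lemma cinner_zero_right[simp]: "cinner x (0::'a::complex_inner) = 0"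
  using cinner_scaleC_right[of x 0 0] by simp
lemma cinner_zero_left[simp]: "cinner (0::'a::complex_inner) x = 0"
  using cinner_scaleC_left[of 0 0 x] by simp
lemma cinner_minus_right: "cinner x (- y::'a::complex_inner) = - cinner x y"
proof -
  have "cinner x (- y) + cinner x y = 0" by (simp flip: cinner_add_right)
  then show ?thesis by (simp add: eq_neg_iff_add_eq_0)
qed
lemma cinner_minus_left: "cinner (- x) (y::'a::complex_inner) = - cinner x y"
proof -
  have "cinner (- x) y + cinner x y = 0" by (simp flip: cinner_add_left)
  then show ?thesis by (simp add: eq_neg_iff_add_eq_0)
qed
lemma cinner_diff_right: "cinner x (y - z::'a::complex_inner) = cinner x y - cinner x z"
proof -
  have "cinner x (y - z) + cinner x z = cinner x y" by (simp flip: cinner_add_right)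
  then show ?thesis by (simp add: eq_diff_eq)
qed
lemma cinner_diff_left: "cinner (x - y) (z::'a::complex_inner) = cinner x z - cinner y z"
proof -
  have "cinner (x - y) z + cinner y z = cinner x z" by (simp flip: cinner_add_left)
  then show ?thesis by (simp add: eq_diff_eq)
qed
lemma cinner_sum_right: "cinner x (\<Sum>i\<in>I. f i) = (\<Sum>i\<in>I. cinner (x::'a::complex_inner) (f i))"
  by (induction I rule: infinite_finite_induct) (auto simp: cinner_add_right)
lemma cinner_sum_left: "cinner (\<Sum>i\<in>I. f i) x = (\<Sum>i\<in>I. cinner (f i) (x::'a::complex_inner))"
  by (induction I rule: infinite_finite_induct) (auto simp: cinner_add_left)
lemma cinner_self_norm: "cinner x x = complex_of_real ((norm (x::'a::complex_inner))\<^sup>2)"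
proof -
  have "Im (cinner x x) = 0" "Re (cinner x x) \<ge> 0" using cinner_self_real_nonneg by auto
  then show ?thesis by (simp add: norm_eq_sqrt_cinner complex_eq_iff)
qed
lemma norm_sq_cinner: "(norm (x::'a::complex_inner))\<^sup>2 = Re (cinner x x)"
  by (simp add: cinner_self_norm)
lemma norm_scaleC: "norm (a *\<^sub>C (x::'a::complex_inner)) = cmod a * norm x"
proof -
  have "(norm (a *\<^sub>C x))\<^sup>2 = Re (cnj a * a * cinner x x)"
    by (simp only: norm_sq_cinner cinner_scaleC_left cinner_scaleC_right mult.assoc mult.left_commute)
  also have "cnj a * a = complex_of_real ((cmod a)\<^sup>2)"
    by (simp add: complex_mult_cnj mult.commute cmod_power2 flip: of_real_power of_real_add)
  finally have "(norm (a *\<^sub>C x))\<^sup>2 = (cmod a * norm x)\<^sup>2"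
    by (simp add: power_mult_distrib norm_sq_cinner)
  then show ?thesis by (simp add: power2_eq_iff_nonneg)
qed
lemma norm_add_sq: "(norm (x + y))\<^sup>2 = (norm x)\<^sup>2 + (norm (y::'a::complex_inner))\<^sup>2 + 2 * Re (cinner x y)"
proof -
  have "cinner y x = cnj (cinner x y)" by (rule cinner_commute)
  then show ?thesis by (simp add: norm_sq_cinner cinner_add_left cinner_add_right)
qed
lemma norm_diff_sq: "(norm (x - y))\<^sup>2 = (norm x)\<^sup>2 + (norm (y::'a::complex_inner))\<^sup>2 - 2 * Re (cinner x y)"
  using norm_add_sq[of x "-y"] by (simp add: cinner_minus_right)
lemma polarization: "cinner a b = ((norm (a + b))\<^sup>2 - (norm (a - b::'a::complex_inner))\<^sup>2) / 4
   - \<i> * ((norm (a + \<i> *\<^sub>C b))\<^sup>2 - (norm (a - \<i> *\<^sub>C b))\<^sup>2) / 4"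
  by (simp add: norm_add_sq norm_diff_sq norm_scaleC cinner_scaleC_right complex_eq_iff)

lemma clin_add: "is_clinear T \<Longrightarrow> T (x + y) = T x + T y"
  by (simp add: is_clinear_def)
lemma clin_scaleC: "is_clinear T \<Longrightarrow> T (c *\<^sub>C x) = c *\<^sub>C T x"
  by (simp add: is_clinear_def)
lemma clin_zero: "is_clinear T \<Longrightarrow> T 0 = 0"
  using clin_scaleC[of T 0 0] by simp
lemma clin_minus: "is_clinear T \<Longrightarrow> T (- x) = - T x"
  using clin_scaleC[of T "-1" x] by (simp add: scaleC_minus_left scaleC_one)
lemma clin_diff: "is_clinear T \<Longrightarrow> T (x - y) = T x - T y"
  using clin_add[of T x "-y"] clin_minus[of T y] by simp
lemma clin_sum: "is_clinear T \<Longrightarrow> T (\<Sum>i\<in>I. f i) = (\<Sum>i\<in>I. T (f i))"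
  by (induction I rule: infinite_finite_induct) (auto simp: clin_add clin_zero)
lemma clin_scaleR: "is_clinear T \<Longrightarrow> T (r *\<^sub>R x) = r *\<^sub>R T x"
  by (simp add: scaleR_scaleC clin_scaleC)

lemma bclin_bound: assumes "is_bounded_clinear T"
  obtains K where "K \<ge> 0" "\<And>x. norm (T x) \<le> K * norm x"
proof -
  obtain K where "\<And>x. norm (T x) \<le> norm x * K" using assms by (auto simp: is_bounded_clinear_def)
  then have "norm (T x) \<le> max K 0 * norm x" for x
    by (smt (verit, best) mult.commute mult_right_mono norm_ge_zero)
  then show ?thesis using that[of "max K 0"] by auto
qed

lemma sesq_polar:
  fixes T :: "'a::complex_inner \<Rightarrow> 'a"
  assumes "is_clinear T"
  shows "4 * cinner y (T x) = cinner (y + x) (T (y + x)) - cinner (y - x) (T (y - x))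
     - \<i> * (cinner (y + \<i> *\<^sub>C x) (T (y + \<i> *\<^sub>C x)) - cinner (y - \<i> *\<^sub>C x) (T (y - \<i> *\<^sub>C x)))"
  using assms
  apply (simp add: clin_add clin_diff clin_scaleC cinner_add_left cinner_add_right cinner_diff_left
      cinner_diff_right cinner_scaleC_left cinner_scaleC_right)
  apply (simp add: algebra_simps)
  done

lemma numrad_bound:
  fixes T :: "'a::complex_inner \<Rightarrow> 'a"
  assumes lin: "is_clinear T" and d: "\<And>x. cmod (cinner x (T x)) \<le> d * (norm x)\<^sup>2"
  shows "norm (T x) \<le> 4 * d * norm x"
proof (cases "x = 0")
  case True
  then show ?thesis using clin_zero[OF lin] by simp
next
  case x0: False
  have "0 \<le> d * (norm x)\<^sup>2" using d[of x] by (meson norm_ge_zero order.trans)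
  then have dpos: "d \<ge> 0" using x0 by (simp add: zero_le_mult_iff)
  show ?thesis
  proof (cases "T x = 0")
    case True then show ?thesis using dpos by simp
  next
    case False
  define y where "y = (norm x / norm (T x)) *\<^sub>R T x"
  have ny: "norm y = norm x" using False by (simp add: y_def)
  have "cinner y (T x) = complex_of_real (norm x / norm (T x)) * cinner (T x) (T x)"
    by (simp add: y_def scaleR_scaleC cinner_scaleC_left)
  also have "\<dots> = complex_of_real (norm x * norm (T x))"
    using False by (simp add: cinner_self_norm power2_eq_square)
  finally have cy: "cinner y (T x) = complex_of_real (norm x * norm (T x))" .
  have b: "cmod (cinner v (T v)) \<le> d * (2 * norm x)\<^sup>2" if "norm v \<le> 2 * norm x" for v
  proof -
    have "(norm v)\<^sup>2 \<le> (2 * norm x)\<^sup>2" using that by (intro power_mono) auto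
    then show ?thesis using d[of v] dpos by (meson mult_left_mono order.trans)
  qed
  have n1: "norm (y + c *\<^sub>C x) \<le> 2 * norm x" if "cmod c = 1" for c
    using norm_triangle_ineq[of y "c *\<^sub>C x"] that by (simp add: norm_scaleC ny)
  have n2: "norm (y - c *\<^sub>C x) \<le> 2 * norm x" if "cmod c = 1" for c
    using norm_triangle_ineq4[of y "c *\<^sub>C x"] that by (simp add: norm_scaleC ny)
  have e1: "y + x = y + 1 *\<^sub>C x" "y - x = y - 1 *\<^sub>C x" by (simp_all add: scaleC_one)
  have "4 * (norm x * norm (T x)) = cmod (4 * cinner y (T x))"
    by (simp add: cy norm_mult)
  also have "\<dots> \<le> d * (2 * norm x)\<^sup>2 + d * (2 * norm x)\<^sup>2 + (d * (2 * norm x)\<^sup>2 + d * (2 * norm x)\<^sup>2)"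
    unfolding sesq_polar[OF lin]
    apply (rule order.trans[OF norm_triangle_ineq4])
    apply (rule add_mono)
     apply (rule order.trans[OF norm_triangle_ineq4])
     apply (rule add_mono)
      apply (rule b, subst e1, rule n1, simp)
     apply (rule b, subst e1, rule n2, simp)
    apply (subst norm_mult, subst norm_ii, subst mult_1)
    apply (rule order.trans[OF norm_triangle_ineq4])
    apply (rule add_mono)
     apply (rule b, rule n1, simp)
    apply (rule b, rule n2, simp)
    done
  finally have "norm x * norm (T x) \<le> norm x * (4 * d * norm x)"
    by (simp add: power2_eq_square algebra_simps)
  then show ?thesis using x0 by simp
  qed
qed

lemma quad_zero:
  fixes T :: "'a::complex_inner \<Rightarrow> 'a"
  assumes lin: "is_clinear T" and d: "\<And>x. cinner x (T x) = 0"
  shows "T x = 0"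
  using numrad_bound[OF lin, of 0 x] d by simp

lemma orth_proj_clin: "is_orth_proj P \<Longrightarrow> is_clinear P"
  by (simp add: is_orth_proj_def is_bounded_clinear_def)
lemma orth_proj_idem: "is_orth_proj P \<Longrightarrow> P (P x) = P x"
  by (simp add: is_orth_proj_def fun_eq_iff o_def)
lemma orth_proj_adj: "is_orth_proj P \<Longrightarrow> cinner (P x) y = cinner x (P y)"
  by (simp add: is_orth_proj_def is_adjoint_def)
lemma orth_proj_quad: "is_orth_proj P \<Longrightarrow> cinner x (P x) = complex_of_real ((norm (P x))\<^sup>2)"
  by (metis orth_proj_adj orth_proj_idem cinner_self_norm)

instance chilbert_space \<subseteq> banach ..

lemma bclin_clin: "is_bounded_clinear T \<Longrightarrow> is_clinear T"
  by (simp add: is_bounded_clinear_def)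

lemma clin_bound_bounded_linear:
  "is_clinear T \<Longrightarrow> (\<And>x. norm (T x) \<le> K * norm x) \<Longrightarrow> bounded_linear T"
  by (rule bounded_linear_intro[of _ K]) (auto simp: clin_add clin_scaleR mult.commute)

lemma bclin_bounded_linear: "is_bounded_clinear T \<Longrightarrow> bounded_linear T"
  using bclin_bound clin_bound_bounded_linear bclin_clin by blast

lemma clin_bound_bclin:
  assumes "is_clinear T" "\<And>x. norm (T x) \<le> K * norm x" shows "is_bounded_clinear T"
  unfolding is_bounded_clinear_def using assms by (auto simp: mult.commute)

lemma bounded_linear_scaleC: "bounded_linear (\<lambda>v::'a::complex_inner. c *\<^sub>C v)"
  by (rule bounded_linear_intro[of _ "cmod c"])
     (auto simp: scaleC_add_right scaleR_scaleC scaleC_scaleC mult.commute norm_scaleC)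

lemma bounded_linear_scaleC_left: "bounded_linear (\<lambda>c. c *\<^sub>C (v::'a::complex_inner))"
  by (rule bounded_linear_intro[of _ "norm v"])
     (auto simp: scaleC_add_left scaleR_scaleC scaleC_scaleC norm_scaleC scaleR_conv_of_real)

lemma clin_funpow: "is_clinear (R::'a::complex_vector \<Rightarrow> 'a) \<Longrightarrow> is_clinear (R ^^ n)"
  by (induction n) (auto simp: is_clinear_def funpow.simps)

lemma funpow_bound:
  fixes R :: "'a::real_normed_vector \<Rightarrow> 'a"
  assumes "\<And>x. norm (R x) \<le> r * norm x" "r \<ge> 0"
  shows "norm ((R ^^ n) x) \<le> r ^ n * norm x"
proof (induction n)
  case (Suc n)
  have "norm ((R ^^ Suc n) x) \<le> r * norm ((R ^^ n) x)" using assms(1) by (simp add: funpow.simps)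
  also have "\<dots> \<le> r * (r ^ n * norm x)" using Suc assms(2) by (rule mult_left_mono)
  finally show ?case by (simp add: mult.assoc)
qed simp

lemma neumann:
  fixes R :: "'a::chilbert_space \<Rightarrow> 'a"
  assumes lin: "is_clinear R" and b: "\<And>x. norm (R x) \<le> r * norm x" and r: "0 \<le> r" "r < 1"
  obtains N where "is_bounded_clinear N" "\<And>x. N (x - R x) = x" "\<And>x. N x - R (N x) = x"
proof -
  define N where "N x = (\<Sum>n. (R ^^ n) x)" for x
  have sg: "summable (\<lambda>n. r ^ n)" using r by (simp add: summable_geometric)
  have sm: "summable (\<lambda>n. (R ^^ n) x)" for x
    by (rule summable_comparison_test[of _ "\<lambda>n. r ^ n * norm x"])
       (use funpow_bound[OF b r(1)] sg in \<open>auto intro: summable_mult2\<close>)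
  have blR: "bounded_linear R" using clin_bound_bounded_linear[OF lin b] .
  have linN: "is_clinear N"
    unfolding is_clinear_def N_def
  proof (intro conjI allI)
    fix x y
    show "(\<Sum>n. (R ^^ n) (x + y)) = (\<Sum>n. (R ^^ n) x) + (\<Sum>n. (R ^^ n) y)"
      using suminf_add[OF sm[of x] sm[of y]] clin_funpow[OF lin] by (simp add: clin_add)
  next
    fix c x
    show "(\<Sum>n. (R ^^ n) (c *\<^sub>C x)) = c *\<^sub>C (\<Sum>n. (R ^^ n) x)"
      using bounded_linear.suminf[OF bounded_linear_scaleC[of c] sm[of x]] clin_funpow[OF lin]
      by (simp add: clin_scaleC)
  qed
  have bN: "norm (N x) \<le> (1 / (1 - r)) * norm x" for x
  proof -
    have "norm (N x) \<le> (\<Sum>n. r ^ n * norm x)"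
      unfolding N_def by (rule norm_suminf_le) (use funpow_bound[OF b r(1)] sg in \<open>auto intro: summable_mult2\<close>)
    also have "\<dots> = (1 / (1 - r)) * norm x"
      using r by (simp add: suminf_mult2[OF sg, symmetric] suminf_geometric)
    finally show ?thesis .
  qed
  have shift: "(\<Sum>n. (R ^^ Suc n) x) = N x - x" for x
    unfolding N_def using suminf_split_head[OF sm[of x]] by simp
  have RN: "R (N x) = N x - x" for x
  proof -
    have "R (N x) = (\<Sum>n. R ((R ^^ n) x))"
      unfolding N_def by (rule bounded_linear.suminf[OF blR sm])
    also have "\<dots> = (\<Sum>n. (R ^^ Suc n) x)" by simp
    finally show ?thesis using shift by simp
  qed
  have NR: "N (R x) = N x - x" for x
  proof -
    have "N (R x) = (\<Sum>n. (R ^^ Suc n) x)" unfolding N_def by (simp add: funpow_swap1)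
    then show ?thesis using shift by simp
  qed
  show ?thesis
  proof (rule that)
    show "is_bounded_clinear N" using clin_bound_bclin[OF linN bN] .
    show "N (x - R x) = x" for x using NR[of x] by (simp add: clin_diff[OF linN])
    show "N x - R (N x) = x" for x using RN[of x] by simp
  qed
qed

lemma spec_resolvent_open:
  fixes T :: "'a::chilbert_space \<Rightarrow> 'a"
  assumes bT: "is_bounded_clinear T" and l: "l \<notin> op_spectrum T"
  shows "\<exists>e>0. \<forall>m. cmod (m - l) < e \<longrightarrow> m \<notin> op_spectrum T"
proof -
  have linT: "is_clinear T" using bT bclin_clin by blast
  obtain S where bS: "is_bounded_clinear S" and S1: "\<And>x. S (T x - l *\<^sub>C x) = x"
    and S2: "\<And>x. T (S x) - l *\<^sub>C S x = x"
    using l unfolding op_spectrum_def by blast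
  have linS: "is_clinear S" using bS bclin_clin by blast
  obtain C where C0: "C \<ge> 0" and C: "\<And>x. norm (S x) \<le> C * norm x" using bclin_bound[OF bS] by blast
  define e where "e = 1 / (C + 1)"
  have e0: "e > 0" using C0 by (simp add: e_def)
  have "m \<notin> op_spectrum T" if m: "cmod (m - l) < e" for m
  proof -
    define R where "R x = (m - l) *\<^sub>C S x" for x
    have linR: "is_clinear R" using linS
      by (simp add: is_clinear_def R_def scaleC_add_right scaleC_scaleC mult.commute)
    have r0: "0 \<le> cmod (m - l) * C" using C0 by simp
    have r1: "cmod (m - l) * C < 1"
    proof -
      have "cmod (m - l) * C \<le> e * C" using m C0 by (simp add: mult_right_mono)
      also have "\<dots> < 1" using C0 by (simp add: e_def field_simps)
      finally show ?thesis .
    qed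
    have bR: "norm (R x) \<le> (cmod (m - l) * C) * norm x" for x
      using C[of x] by (simp add: R_def norm_scaleC mult.assoc mult_left_mono)
    obtain N where bN: "is_bounded_clinear N" and N1: "\<And>x. N (x - R x) = x"
      and N2: "\<And>x. N x - R (N x) = x"
      using neumann[OF linR bR r0 r1] by blast
    have linN: "is_clinear N" using bN bclin_clin by blast
    define S' where "S' x = N (S x)" for x
    have "is_bounded_clinear S'"
    proof -
      obtain C2 where C2: "C2 \<ge> 0" "\<And>x. norm (N x) \<le> C2 * norm x" using bclin_bound[OF bN] by blast
      have "norm (S' x) \<le> (C2 * C) * norm x" for x
      proof -
        have "norm (S' x) \<le> C2 * norm (S x)" using C2 by (simp add: S'_def)
        also have "\<dots> \<le> C2 * (C * norm x)" using C C2 by (simp add: mult_left_mono)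
        finally show ?thesis by (simp add: mult.assoc)
      qed
      moreover have "is_clinear S'" using linN linS by (simp add: is_clinear_def S'_def)
      ultimately show ?thesis using clin_bound_bclin by blast
    qed
    moreover have "S' (T x - m *\<^sub>C x) = x" for x
    proof -
      have e: "T x - m *\<^sub>C x = (T x - l *\<^sub>C x) - (m - l) *\<^sub>C x" by (simp add: scaleC_diff_left)
      have "S (T x - m *\<^sub>C x) = S (T x - l *\<^sub>C x) - (m - l) *\<^sub>C S x"
        unfolding e by (simp only: clin_diff[OF linS] clin_scaleC[OF linS])
      then have "S (T x - m *\<^sub>C x) = x - R x" by (simp add: S1 R_def)
      then show ?thesis by (simp add: S'_def N1)
    qed
    moreover have "T (S' x) - m *\<^sub>C S' x = x" for x
    proof -
      define w where "w = N (S x)"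
      have wu: "w - (m - l) *\<^sub>C S w = S x" using N2[of "S x"] by (simp add: w_def R_def)
      have "(T w - l *\<^sub>C w) - (m - l) *\<^sub>C (T (S w) - l *\<^sub>C S w) = T (S x) - l *\<^sub>C S x"
        using arg_cong[OF wu, of "\<lambda>v. T v - l *\<^sub>C v"]
        apply (simp add: clin_diff[OF linT] clin_scaleC[OF linT] scaleC_diff_right scaleC_scaleC mult.commute)
        apply (simp add: algebra_simps)
        done
      then have "(T w - l *\<^sub>C w) - (m - l) *\<^sub>C w = x" by (simp add: S2)
      then show ?thesis by (simp add: S'_def flip: w_def) (simp add: scaleC_diff_left algebra_simps)
    qed
    ultimately show ?thesis unfolding op_spectrum_def by blast
  qed
  then show ?thesis using e0 by blast
qed

lemma spec_closed:
  fixes T :: "'a::chilbert_space \<Rightarrow> 'a"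
  assumes bT: "is_bounded_clinear T"
  shows "closed (op_spectrum T)"
  unfolding closed_def open_contains_ball
proof
  fix l assume "l \<in> - op_spectrum T"
  then obtain e where "e > 0" "\<forall>m. cmod (m - l) < e \<longrightarrow> m \<notin> op_spectrum T"
    using spec_resolvent_open[OF bT] by blast
  then show "\<exists>e>0. ball l e \<subseteq> - op_spectrum T"
    by (auto simp: ball_def dist_norm norm_minus_commute intro!: exI[of _ e])
qed

lemma spec_bounded:
  fixes T :: "'a::chilbert_space \<Rightarrow> 'a"
  assumes bT: "is_bounded_clinear T" and K: "\<And>x. norm (T x) \<le> K * norm x" "K \<ge> 0"
  shows "op_spectrum T \<subseteq> cball 0 K"
proof
  fix l assume ls: "l \<in> op_spectrum T"
  show "l \<in> cball 0 K"
  proof (rule ccontr)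
    assume "l \<notin> cball 0 K"
    then have lK: "cmod l > K" by (simp add: dist_norm)
    then have l0: "l \<noteq> 0" using K(2) by auto
    have linT: "is_clinear T" using bT bclin_clin by blast
    define R where "R x = (1 / l) *\<^sub>C T x" for x
    have linR: "is_clinear R" using linT
      by (simp add: is_clinear_def R_def scaleC_add_right scaleC_scaleC mult.commute)
    have bR: "norm (R x) \<le> (K / cmod l) * norm x" for x
      using K(1)[of x] lK by (simp add: R_def norm_scaleC norm_divide divide_right_mono)
    have r0: "0 \<le> K / cmod l" using K(2) by simp
    have r1: "K / cmod l < 1" using lK K(2) by (simp add: divide_less_eq)
    obtain N where bN: "is_bounded_clinear N" and N1: "\<And>x. N (x - R x) = x"
      and N2: "\<And>x. N x - R (N x) = x"
      using neumann[OF linR bR r0 r1] by blast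
    have linN: "is_clinear N" using bN bclin_clin by blast
    define S where "S x = (- 1 / l) *\<^sub>C N x" for x
    have "is_bounded_clinear S"
    proof -
      obtain C2 where C2: "C2 \<ge> 0" "\<And>x. norm (N x) \<le> C2 * norm x" using bclin_bound[OF bN] by blast
      have "norm (S x) \<le> (C2 / cmod l) * norm x" for x
        using C2(2)[of x] l0 by (simp add: S_def norm_scaleC norm_divide divide_right_mono)
      moreover have "is_clinear S" using linN
        by (simp add: is_clinear_def S_def scaleC_add_right scaleC_scaleC mult.commute)
      ultimately show ?thesis using clin_bound_bclin by blast
    qed
    moreover have "S (T x - l *\<^sub>C x) = x" for x
    proof -
      have "T x - l *\<^sub>C x = (- l) *\<^sub>C (x - R x)"
        using l0 by (simp add: R_def scaleC_diff_right scaleC_scaleC scaleC_minus_left scaleC_one)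
      then show ?thesis using l0
        by (simp add: S_def clin_scaleC[OF linN] N1 scaleC_scaleC scaleC_one)
    qed
    moreover have "T (S x) - l *\<^sub>C S x = x" for x
    proof -
      have t1: "T (S x) = - ((1 / l) *\<^sub>C T (N x))"
        by (simp add: S_def clin_scaleC[OF linT] clin_minus[OF linT] scaleC_minus_left)
      have "l * (- 1 / l) = - 1" using l0 by simp
      then have t2: "l *\<^sub>C S x = - N x"
        unfolding S_def scaleC_scaleC by (simp only: scaleC_minus_left scaleC_one)
      have "T (S x) - l *\<^sub>C S x = N x - R (N x)"
        unfolding t1 t2 R_def by simp
      then show ?thesis using N2 by simp
    qed
    ultimately show False using ls unfolding op_spectrum_def by blast
  qed
qed

locale pvm =
  fixes E :: "complex set \<Rightarrow> 'h::chilbert_space \<Rightarrow> 'h"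
  assumes proj: "A \<in> sets borel \<Longrightarrow> is_orth_proj (E A)"
    and empty: "E {} = (\<lambda>x. 0)" and univ: "E UNIV = id"
    and inter: "A \<in> sets borel \<Longrightarrow> B \<in> sets borel \<Longrightarrow> E (A \<inter> B) = E A \<circ> E B"
    and ca: "range F \<subseteq> sets borel \<Longrightarrow> disjoint_family F \<Longrightarrow> (\<lambda>n. E (F n) x) sums E (\<Union>n. F n) x"

lemma spectral_measure_pvm: "spectral_measure_of T E \<Longrightarrow> pvm E"
  unfolding spectral_measure_of_def pvm_def by blast

context pvm begin

lemma E_lin: "A \<in> sets borel \<Longrightarrow> is_clinear (E A)"
  using proj orth_proj_clin by blast

lemma E_comp: "A \<in> sets borel \<Longrightarrow> B \<in> sets borel \<Longrightarrow> E A (E B x) = E (A \<inter> B) x"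
  using inter by simp

lemma E_empty[simp]: "E {} x = 0" using empty by simp
lemma E_univ[simp]: "E UNIV x = x" using univ by simp

lemma E_union: assumes "A \<in> sets borel" "B \<in> sets borel" "A \<inter> B = {}"
  shows "E (A \<union> B) x = E A x + E B x"
proof -
  define F where "F n = (if n = 0 then A else if n = 1 then B else {})" for n :: nat
  have "range F \<subseteq> sets borel" using assms by (auto simp: F_def)
  moreover have "disjoint_family F" using assms by (auto simp: disjoint_family_on_def F_def)
  ultimately have s1: "(\<lambda>n. E (F n) x) sums E (\<Union>n. F n) x" by (rule ca)
  have U: "(\<Union>n. F n) = A \<union> B"
  proof
    show "(\<Union>n. F n) \<subseteq> A \<union> B" by (auto simp: F_def split: if_splits)
    show "A \<union> B \<subseteq> (\<Union>n. F n)" using UN_upper[of 0 UNIV F] UN_upper[of 1 UNIV F] by (auto simp: F_def)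
  qed
  have s2: "(\<lambda>n. E (F n) x) sums (\<Sum>n\<in>{0,1}. E (F n) x)"
    by (rule sums_finite) (auto simp: F_def)
  show ?thesis using sums_unique2[OF s1 s2] U by (simp add: F_def)
qed

lemma E_orth: assumes "A \<in> sets borel" "B \<in> sets borel" "A \<inter> B = {}"
  shows "cinner (E A x) (E B y) = 0"
  using assms by (simp add: orth_proj_adj[OF proj] E_comp)

lemma E_quad: "A \<in> sets borel \<Longrightarrow> cinner x (E A x) = complex_of_real ((norm (E A x))\<^sup>2)"
  using orth_proj_quad[OF proj] by blast

lemma E_null: assumes S: "S \<in> sets borel" and n: "\<And>x. E (- S) x = 0" and A: "A \<in> sets borel"
  shows "E A x = E (A \<inter> S) x"
proof -
  have "E A x = E ((A \<inter> S) \<union> (A \<inter> - S)) x" by (rule arg_cong[where f="\<lambda>B. E B x"]) blast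
  also have "\<dots> = E (A \<inter> S) x + E (A \<inter> - S) x" using S A by (intro E_union) auto
  also have "E (A \<inter> - S) x = 0" using S A by (simp flip: E_comp add: n clin_zero[OF E_lin])
  finally show ?thesis by simp
qed

lemma E_sum:
  assumes "finite I" "\<And>i. i \<in> I \<Longrightarrow> A i \<in> sets borel" "disjoint_family_on A I"
  shows "E (\<Union>i\<in>I. A i) x = (\<Sum>i\<in>I. E (A i) x)"
  using assms
proof (induction I rule: finite_induct)
  case (insert j I)
  have "E (\<Union>i\<in>insert j I. A i) x = E (A j \<union> (\<Union>i\<in>I. A i)) x" by simp
  also have "\<dots> = E (A j) x + E (\<Union>i\<in>I. A i) x"
    using insert.prems insert.hyps
    by (intro E_union) (auto simp: disjoint_family_on_def)
  also have "E (\<Union>i\<in>I. A i) x = (\<Sum>i\<in>I. E (A i) x)"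
    using insert by (auto simp: disjoint_family_on_def)
  finally show ?case using insert.hyps by simp
qed simp

lemma E_norm_union: assumes "A \<in> sets borel" "B \<in> sets borel" "A \<inter> B = {}"
  shows "(norm (E (A \<union> B) x))\<^sup>2 = (norm (E A x))\<^sup>2 + (norm (E B x))\<^sup>2"
  using assms by (simp add: E_union norm_add_sq E_orth)

lemma E_norm_partial:
  fixes F :: "nat \<Rightarrow> complex set"
  assumes "range F \<subseteq> sets borel" "disjoint_family F"
  shows "(\<Sum>i<n. (norm (E (F i) x))\<^sup>2) = (norm (E (\<Union>i<n. F i) x))\<^sup>2"
proof (induction n)
  case (Suc n)
  have "(\<Union>i<Suc n. F i) = F n \<union> (\<Union>i<n. F i)" by (auto simp: lessThan_Suc)
  moreover have "F n \<inter> (\<Union>i<n. F i) = {}" using assms(2)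
    unfolding disjoint_family_on_def by (metis (no_types, lifting) UN_E disjoint_iff lessThan_iff less_irrefl iso_tuple_UNIV_I)
  moreover have "(\<Union>i<n. F i) \<in> sets borel" using assms(1) by auto
  ultimately have "(norm (E (\<Union>i<Suc n. F i) x))\<^sup>2 = (norm (E (F n) x))\<^sup>2 + (norm (E (\<Union>i<n. F i) x))\<^sup>2"
    using assms(1) by (simp add: E_norm_union)
  then show ?case using Suc by simp
qed simp

lemma E_norm_sums:
  fixes F :: "nat \<Rightarrow> complex set"
  assumes "range F \<subseteq> sets borel" "disjoint_family F"
  shows "(\<lambda>i. (norm (E (F i) x))\<^sup>2) sums (norm (E (\<Union>i. F i) x))\<^sup>2"
proof -
  have "(\<lambda>n. \<Sum>i<n. E (F i) x) \<longlonglongrightarrow> E (\<Union>i. F i) x" using ca[OF assms] by (simp add: sums_def)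
  then have "(\<lambda>n. (norm (\<Sum>i<n. E (F i) x))\<^sup>2) \<longlonglongrightarrow> (norm (E (\<Union>i. F i) x))\<^sup>2"
    by (intro tendsto_intros)
  moreover have "(\<Sum>i<n. E (F i) x) = E (\<Union>i<n. F i) x" for n
    using assms by (subst E_sum) (auto simp: disjoint_family_on_def)
  ultimately show ?thesis using E_norm_partial[OF assms] by (simp add: sums_def)
qed

definition mu where "mu x = spectral_mu E x"

lemma sa_borel: "sigma_algebra (UNIV::complex set) (sets borel)"
  using sets.sigma_algebra_axioms[of borel] by simp

lemma sets_mu[simp]: "sets (mu x) = sets borel"
  by (simp add: mu_def spectral_mu_def sigma_algebra.sets_measure_of_eq[OF sa_borel])

lemma space_mu[simp]: "space (mu x) = UNIV"
  by (simp add: mu_def spectral_mu_def sigma_algebra.space_measure_of_eq[OF sa_borel])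

lemma emeasure_mu: assumes "A \<in> sets borel" shows "emeasure (mu x) A = ennreal ((norm (E A x))\<^sup>2)"
  unfolding mu_def spectral_mu_def
proof (rule emeasure_measure_of_sigma[OF sa_borel _ _ assms])
  show "positive (sets borel) (\<lambda>A. ennreal ((norm (E A x))\<^sup>2))"
    by (simp add: positive_def)
  show "countably_additive (sets borel) (\<lambda>A. ennreal ((norm (E A x))\<^sup>2))"
    unfolding countably_additive_def
  proof (intro allI impI)
    fix F :: "nat \<Rightarrow> complex set"
    assume F: "range F \<subseteq> sets borel" "disjoint_family F" "\<Union> (range F) \<in> sets borel"
    have s: "(\<lambda>i. (norm (E (F i) x))\<^sup>2) sums (norm (E (\<Union>i. F i) x))\<^sup>2"
      using E_norm_sums F by blast
    show "(\<Sum>i. ennreal ((norm (E (F i) x))\<^sup>2)) = ennreal ((norm (E (\<Union> (range F)) x))\<^sup>2)"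
    proof -
      have "(\<Sum>i. ennreal ((norm (E (F i) x))\<^sup>2)) = ennreal (\<Sum>i. (norm (E (F i) x))\<^sup>2)"
        by (rule suminf_ennreal2) (auto intro: sums_summable[OF s])
      also have "(\<Sum>i. (norm (E (F i) x))\<^sup>2) = (norm (E (\<Union>i. F i) x))\<^sup>2"
        by (rule sums_unique[OF s, symmetric])
      finally show ?thesis .
    qed
  qed
qed

lemma finite_mu: "finite_measure (mu x)"
proof (rule finite_measureI)
  have "emeasure (mu x) UNIV = ennreal ((norm (E UNIV x))\<^sup>2)" by (rule emeasure_mu) simp
  then show "emeasure (mu x) (space (mu x)) \<noteq> \<infinity>" by simp
qed

lemma measure_mu: "A \<in> sets borel \<Longrightarrow> measure (mu x) A = (norm (E A x))\<^sup>2"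
  by (simp add: measure_def emeasure_mu)

end

context pvm begin

definition part :: "'i set \<Rightarrow> ('i \<Rightarrow> complex set) \<Rightarrow> bool" where
  "part I A \<longleftrightarrow> finite I \<and> (\<forall>i\<in>I. A i \<in> sets borel) \<and> disjoint_family_on A I \<and>
     (\<forall>x. (\<Sum>i\<in>I. E (A i) x) = x)"

definition Op :: "'i set \<Rightarrow> ('i \<Rightarrow> complex set) \<Rightarrow> ('i \<Rightarrow> complex) \<Rightarrow> 'h \<Rightarrow> 'h" where
  "Op I A c x = (\<Sum>i\<in>I. c i *\<^sub>C E (A i) x)"

lemma EE: assumes "part I A" "i \<in> I" "j \<in> I"
  shows "E (A i) (E (A j) x) = (if i = j then E (A i) x else 0)"
proof -
  have b: "A i \<in> sets borel" "A j \<in> sets borel" using assms by (auto simp: part_def)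
  show ?thesis
  proof (cases "i = j")
    case True then show ?thesis using b by (simp add: E_comp)
  next
    case False
    then have "A i \<inter> A j = {}" using assms by (auto simp: part_def disjoint_family_on_def)
    then show ?thesis using b False by (simp add: E_comp)
  qed
qed

lemma Op_lin: assumes "part I A" shows "is_clinear (Op I A c)"
proof -
  have l: "is_clinear (E (A i))" if "i \<in> I" for i using assms that E_lin by (auto simp: part_def)
  show ?thesis unfolding is_clinear_def Op_def
    using l by (auto simp: clin_add clin_scaleC scaleC_add_right scaleC_scaleC mult.commute
        sum.distrib scaleC_sum_right intro!: sum.cong)
qed

lemma E_Op: assumes "part I A" "j \<in> I" shows "E (A j) (Op I A c x) = c j *\<^sub>C E (A j) x"
proof -
  have l: "is_clinear (E (A j))" using assms E_lin by (auto simp: part_def)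
  have "E (A j) (Op I A c x) = (\<Sum>i\<in>I. c i *\<^sub>C E (A j) (E (A i) x))"
    unfolding Op_def by (simp add: clin_sum[OF l] clin_scaleC[OF l])
  also have "\<dots> = (\<Sum>i\<in>I. if i = j then c j *\<^sub>C E (A j) x else 0)"
    using assms by (intro sum.cong) (auto simp: EE)
  also have "\<dots> = c j *\<^sub>C E (A j) x" using assms by (simp add: part_def)
  finally show ?thesis .
qed

lemma Op_Op: assumes "part I A" shows "Op I A c (Op I A d x) = Op I A (\<lambda>i. c i * d i) x"
  unfolding Op_def[of I A c]
  using assms by (simp add: E_Op scaleC_scaleC) (simp add: Op_def)

lemma Op_one: assumes "part I A" shows "Op I A (\<lambda>i. 1) x = x"
  using assms by (simp add: Op_def part_def scaleC_one)

lemma Op_pow: assumes "part I A" shows "(Op I A c ^^ n) x = Op I A (\<lambda>i. c i ^ n) x"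
proof (induction n arbitrary: x)
  case 0 then show ?case using Op_one[OF assms] by simp
next
  case (Suc n)
  have "(Op I A c ^^ Suc n) x = Op I A c ((Op I A c ^^ n) x)" by simp
  also have "\<dots> = Op I A (\<lambda>i. c i * c i ^ n) x" using Suc Op_Op[OF assms] by simp
  finally show ?case by simp
qed

lemma cinner_Op: assumes "part I A"
  shows "cinner (Op I A c x) (Op I A d x) = (\<Sum>i\<in>I. cnj (c i) * d i * complex_of_real ((norm (E (A i) x))\<^sup>2))"
proof -
  have b: "A i \<in> sets borel" if "i \<in> I" for i using assms that by (auto simp: part_def)
  have e: "cinner (E (A i) x) (E (A j) x) = (if i = j then complex_of_real ((norm (E (A i) x))\<^sup>2) else 0)"
    if "i \<in> I" "j \<in> I" for i j
    using that assms b by (auto simp: orth_proj_adj[OF proj] EE E_quad)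
  have "cinner (Op I A c x) (Op I A d x) =
      (\<Sum>i\<in>I. \<Sum>j\<in>I. cnj (c i) * d j * cinner (E (A i) x) (E (A j) x))"
    unfolding Op_def
    apply (simp add: cinner_sum_left cinner_sum_right cinner_scaleC_left
        cinner_scaleC_right sum_distrib_left mult.assoc)
    apply (subst (2) sum.swap)
    apply (simp add: mult_ac)
    done
  also have "\<dots> = (\<Sum>i\<in>I. \<Sum>j\<in>I. if j = i then cnj (c i) * d i * complex_of_real ((norm (E (A i) x))\<^sup>2) else 0)"
    by (intro sum.cong refl) (auto simp: e)
  also have "\<dots> = (\<Sum>i\<in>I. cnj (c i) * d i * complex_of_real ((norm (E (A i) x))\<^sup>2))"
    using assms by (simp add: part_def)
  finally show ?thesis .
qed

lemma quad_Op: assumes "part I A"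
  shows "cinner x (Op I A c x) = (\<Sum>i\<in>I. c i * complex_of_real ((norm (E (A i) x))\<^sup>2))"
proof -
  have b: "A i \<in> sets borel" if "i \<in> I" for i using assms that by (auto simp: part_def)
  show ?thesis unfolding Op_def
    by (simp add: cinner_sum_right cinner_scaleC_right E_quad b)
qed

lemma sR_fact: "(z::complex) /\<^sub>R fact n = z / fact n"
  by (simp add: scaleR_conv_of_real divide_inverse mult.commute)

lemma Op_exp: assumes "part I A" shows "op_exp (Op I A c) x = Op I A (\<lambda>i. exp (c i)) x"
proof -
  have "op_exp (Op I A c) x = (\<Sum>n. (1 / fact n) *\<^sub>R Op I A (\<lambda>i. c i ^ n) x)"
    unfolding op_exp_def by (simp add: Op_pow[OF assms])
  also have "\<dots> = (\<Sum>n. \<Sum>i\<in>I. (c i ^ n /\<^sub>R fact n) *\<^sub>C E (A i) x)"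
    unfolding Op_def by (simp add: scaleR_scaleC scaleC_sum_right scaleC_scaleC sR_fact)
  also have "\<dots> = (\<Sum>i\<in>I. \<Sum>n. (c i ^ n /\<^sub>R fact n) *\<^sub>C E (A i) x)"
  proof (rule suminf_sum)
    fix i show "summable (\<lambda>n. (c i ^ n /\<^sub>R fact n) *\<^sub>C E (A i) x)"
      using bounded_linear.summable[OF bounded_linear_scaleC_left summable_exp_generic] by blast
  qed
  also have "\<dots> = (\<Sum>i\<in>I. exp (c i) *\<^sub>C E (A i) x)"
  proof (rule sum.cong[OF refl])
    fix i
    show "(\<Sum>n. (c i ^ n /\<^sub>R fact n) *\<^sub>C E (A i) x) = exp (c i) *\<^sub>C E (A i) x"
    proof -
      have "(\<Sum>n. (c i ^ n /\<^sub>R fact n) *\<^sub>C E (A i) x) = (\<Sum>n. c i ^ n /\<^sub>R fact n) *\<^sub>C E (A i) x"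
        by (rule bounded_linear.suminf[OF bounded_linear_scaleC_left summable_exp_generic, symmetric])
      then show ?thesis by (simp add: exp_def)
    qed
  qed
  finally show ?thesis by (simp add: Op_def)
qed

end

lemma pow_approx:
  fixes A B :: "'a::complex_inner \<Rightarrow> 'a"
  assumes linA: "is_clinear A" and bA: "\<And>v. norm (A v) \<le> M * norm v" and bB: "\<And>v. norm (B v) \<le> M * norm v"
    and M: "M \<ge> 0" and d: "\<And>v. norm (A v - B v) \<le> e * norm v" and e: "e \<ge> 0"
  shows "norm ((A ^^ n) x - (B ^^ n) x) \<le> real n * M ^ (n - 1) * e * norm x"
proof (induction n)
  case (Suc n)
  have eq: "(A ^^ Suc n) x - (B ^^ Suc n) x = A ((A ^^ n) x - (B ^^ n) x) + (A ((B ^^ n) x) - B ((B ^^ n) x))"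
    by (simp add: clin_diff[OF linA])
  have "norm ((A ^^ Suc n) x - (B ^^ Suc n) x) \<le> norm (A ((A ^^ n) x - (B ^^ n) x)) + norm (A ((B ^^ n) x) - B ((B ^^ n) x))"
    unfolding eq by (rule norm_triangle_ineq)
  also have "\<dots> \<le> M * (real n * M ^ (n - 1) * e * norm x) + e * (M ^ n * norm x)"
  proof (rule add_mono)
    show "norm (A ((A ^^ n) x - (B ^^ n) x)) \<le> M * (real n * M ^ (n - 1) * e * norm x)"
      using bA[of "(A ^^ n) x - (B ^^ n) x"] Suc M by (meson mult_left_mono order.trans)
    show "norm (A ((B ^^ n) x) - B ((B ^^ n) x)) \<le> e * (M ^ n * norm x)"
      using d[of "(B ^^ n) x"] funpow_bound[OF bB M, of n x] e by (meson mult_left_mono order.trans)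
  qed
  also have "\<dots> = real (Suc n) * M ^ (Suc n - 1) * e * norm x"
    by (cases n) (simp_all add: algebra_simps)
  finally show ?case .
qed simp

lemma op_exp_summable:
  fixes A :: "'a::chilbert_space \<Rightarrow> 'a"
  assumes bA: "\<And>v. norm (A v) \<le> M * norm v" and M: "M \<ge> 0"
  shows "summable (\<lambda>n. (1 / fact n) *\<^sub>R (A ^^ n) x)"
proof (rule summable_comparison_test[of _ "\<lambda>n. M ^ n / fact n * norm x"])
  show "\<exists>N. \<forall>n\<ge>N. norm ((1 / fact n) *\<^sub>R (A ^^ n) x) \<le> M ^ n / fact n * norm x"
    using funpow_bound[OF bA M] by (auto simp: divide_right_mono mult.commute intro!: exI[of _ 0])
  show "summable (\<lambda>n. M ^ n / fact n * norm x)"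
    using summable_exp[of M] by (intro summable_mult2) (simp add: divide_inverse mult.commute)
qed

lemma exp_real_series: "exp (M::real) = (\<Sum>n. M ^ n / fact n)"
  by (simp add: exp_def divide_inverse mult.commute)

lemma summable_exp_real: "summable (\<lambda>n. (M::real) ^ n / fact n)"
  using summable_exp[of M] by (simp add: divide_inverse mult.commute)

lemma op_exp_bound:
  fixes A :: "'a::chilbert_space \<Rightarrow> 'a"
  assumes bA: "\<And>v. norm (A v) \<le> M * norm v" and M: "M \<ge> 0"
  shows "norm (op_exp A x) \<le> exp M * norm x"
proof -
  have "norm (op_exp A x) \<le> (\<Sum>n. M ^ n / fact n * norm x)"
    unfolding op_exp_def
    using funpow_bound[OF bA M] summable_exp[of M]
    by (intro norm_suminf_le) (auto simp: divide_right_mono mult.commute divide_inverse intro: summable_mult2)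
  also have "\<dots> = exp M * norm x"
    using suminf_mult2[OF summable_exp_real[of M], of "norm x"] exp_real_series[of M] by simp
  finally show ?thesis .
qed

lemma op_exp_lin:
  fixes A :: "'a::chilbert_space \<Rightarrow> 'a"
  assumes linA: "is_clinear A" and bA: "\<And>v. norm (A v) \<le> M * norm v" and M: "M \<ge> 0"
  shows "is_clinear (op_exp A)"
  unfolding is_clinear_def
proof (intro conjI allI)
  note s = op_exp_summable[OF bA M]
  have l: "is_clinear (A ^^ n)" for n using clin_funpow[OF linA] .
  fix x y
  show "op_exp A (x + y) = op_exp A x + op_exp A y"
    unfolding op_exp_def using suminf_add[OF s[of x] s[of y]]
    by (simp add: clin_add[OF l] scaleR_add_right)
next
  note s = op_exp_summable[OF bA M]
  have l: "is_clinear (A ^^ n)" for n using clin_funpow[OF linA] .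
  fix c x
  show "op_exp A (c *\<^sub>C x) = c *\<^sub>C op_exp A x"
    unfolding op_exp_def using bounded_linear.suminf[OF bounded_linear_scaleC[of c] s[of x]]
    by (simp add: clin_scaleC[OF l] scaleR_scaleC scaleC_scaleC mult.commute)
qed

definition expd :: "real \<Rightarrow> real" where "expd M = (\<Sum>n. real n * M ^ (n - 1) / fact n)"

lemma expd_summable: "summable (\<lambda>n. real n * M ^ (n - 1) / fact n)"
proof -
  have "(\<lambda>n. real (Suc n) * M ^ (Suc n - 1) / fact (Suc n)) = (\<lambda>n. M ^ n / fact n)"
    by (rule ext) (simp add: fact_Suc divide_simps del: of_nat_Suc)
  then have "summable (\<lambda>n. real (Suc n) * M ^ (Suc n - 1) / fact (Suc n))"
    using summable_exp_real[of M] by simp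
  then show ?thesis by (subst (asm) summable_Suc_iff)
qed

lemma op_exp_approx:
  fixes A B :: "'a::chilbert_space \<Rightarrow> 'a"
  assumes linA: "is_clinear A" and bA: "\<And>v. norm (A v) \<le> M * norm v" and bB: "\<And>v. norm (B v) \<le> M * norm v"
    and M: "M \<ge> 0" and d: "\<And>v. norm (A v - B v) \<le> e * norm v" and e: "e \<ge> 0"
  shows "norm (op_exp A x - op_exp B x) \<le> expd M * e * norm x"
proof -
  have "op_exp A x - op_exp B x = (\<Sum>n. (1 / fact n) *\<^sub>R ((A ^^ n) x - (B ^^ n) x))"
    unfolding op_exp_def
    using suminf_diff[OF op_exp_summable[OF bA M] op_exp_summable[OF bB M]]
    by (simp add: scaleR_diff_right)
  also have "norm \<dots> \<le> (\<Sum>n. real n * M ^ (n - 1) / fact n * (e * norm x))"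
  proof (rule norm_suminf_le)
    show "norm ((1 / fact n) *\<^sub>R ((A ^^ n) x - (B ^^ n) x)) \<le> real n * M ^ (n - 1) / fact n * (e * norm x)" for n
      using pow_approx[OF linA bA bB M d e, of n x]
      by (simp add: divide_right_mono mult.commute mult.left_commute divide_inverse mult_left_mono)
    show "summable (\<lambda>n. real n * M ^ (n - 1) / fact n * (e * norm x))"
      by (intro summable_mult2 expd_summable)
  qed
  also have "\<dots> = expd M * e * norm x"
  proof -
    have "(\<Sum>n. real n * M ^ (n - 1) / fact n * (e * norm x)) = (\<Sum>n. real n * M ^ (n - 1) / fact n) * (e * norm x)"
      by (rule suminf_mult2[OF expd_summable, symmetric])
    then show ?thesis unfolding expd_def by (simp only: mult.assoc)
  qed
  finally show ?thesis .
qed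

lemma tendsto_cinner:
  fixes a b :: "nat \<Rightarrow> 'a::complex_inner"
  assumes "a \<longlonglongrightarrow> a0" "b \<longlonglongrightarrow> b0"
  shows "(\<lambda>k. cinner (a k) (b k)) \<longlonglongrightarrow> cinner a0 b0"
proof -
  have ib: "(\<lambda>k. \<i> *\<^sub>C b k) \<longlonglongrightarrow> \<i> *\<^sub>C b0"
    by (rule bounded_linear.tendsto[OF bounded_linear_scaleC assms(2)])
  show ?thesis
    unfolding polarization[of "a _" "b _"] polarization[of a0 b0]
    by (intro tendsto_intros assms ib) simp_all
qed


definition fl :: "nat \<Rightarrow> complex \<Rightarrow> int \<times> int" where
  "fl k z = (\<lfloor>real (Suc k) * Re z\<rfloor>, \<lfloor>real (Suc k) * Im z\<rfloor>)"
definition gc :: "nat \<Rightarrow> int \<times> int \<Rightarrow> complex" where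
  "gc k i = Complex (real_of_int (fst i) / real (Suc k)) (real_of_int (snd i) / real (Suc k))"
definition GN :: "real \<Rightarrow> nat \<Rightarrow> int" where "GN K k = \<lceil>real (Suc k) * K\<rceil> + 1"
definition GI :: "real \<Rightarrow> nat \<Rightarrow> (int \<times> int) set" where
  "GI K k = {- GN K k .. GN K k} \<times> {- GN K k .. GN K k}"
definition GA :: "nat \<Rightarrow> int \<times> int \<Rightarrow> complex set" where "GA k i = {z. fl k z = i}"

lemma GI_finite: "finite (GI K k)" by (simp add: GI_def)

lemma floor_bound: assumes "\<bar>t\<bar> \<le> K" shows "\<lfloor>real (Suc k) * t\<rfloor> \<in> {- GN K k .. GN K k}"
proof -
  have a: "real (Suc k) * t \<le> real (Suc k) * K" using assms by (intro mult_left_mono) auto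
  have b: "real (Suc k) * (- t) \<le> real (Suc k) * K" using assms by (intro mult_left_mono) auto
  have c: "real (Suc k) * K \<le> of_int \<lceil>real (Suc k) * K\<rceil>" by (rule le_of_int_ceiling)
  have f1: "of_int \<lfloor>real (Suc k) * t\<rfloor> \<le> real (Suc k) * t" by (rule of_int_floor_le)
  have f2: "real (Suc k) * t < of_int \<lfloor>real (Suc k) * t\<rfloor> + 1" by (rule real_of_int_floor_add_one_gt)
  have "real_of_int \<lfloor>real (Suc k) * t\<rfloor> \<le> of_int (GN K k)" "- real_of_int (GN K k) \<le> of_int \<lfloor>real (Suc k) * t\<rfloor>"
    unfolding GN_def of_int_add of_int_minus of_int_1 using a b c f1 f2 by linarith+
  then show ?thesis by simp
qed

lemma fl_in: "cmod z \<le> K \<Longrightarrow> fl k z \<in> GI K k"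
  using floor_bound[of "Re z" K k] floor_bound[of "Im z" K k] abs_Re_le_cmod[of z] abs_Im_le_cmod[of z]
  by (auto simp: fl_def GI_def)

lemma gc_close: "cmod (z - gc k (fl k z)) \<le> 2 / real (Suc k)"
proof -
  define s where "s = real (Suc k)"
  have s: "s > 0" by (simp add: s_def)
  have r: "\<bar>t - real_of_int \<lfloor>s * t\<rfloor> / s\<bar> \<le> 1 / s" for t
  proof -
    have "real_of_int \<lfloor>s * t\<rfloor> \<le> s * t" "s * t < real_of_int \<lfloor>s * t\<rfloor> + 1" by linarith+
    then have "0 \<le> s * t - real_of_int \<lfloor>s * t\<rfloor>" "s * t - real_of_int \<lfloor>s * t\<rfloor> \<le> 1" by linarith+
    moreover have "t - real_of_int \<lfloor>s * t\<rfloor> / s = (s * t - real_of_int \<lfloor>s * t\<rfloor>) / s"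
      using s by (simp add: field_simps)
    ultimately show ?thesis using s by (simp add: divide_right_mono)
  qed
  have "cmod (z - gc k (fl k z)) \<le> \<bar>Re (z - gc k (fl k z))\<bar> + \<bar>Im (z - gc k (fl k z))\<bar>" by (rule cmod_le)
  also have "\<dots> \<le> 1 / s + 1 / s"
    using r[of "Re z"] r[of "Im z"] by (simp add: gc_def fl_def s_def)
  finally show ?thesis by (simp add: s_def)
qed

lemma GA_borel: "GA k i \<in> sets borel"
proof -
  have "GA k i = {z. real_of_int (fst i) \<le> real (Suc k) * Re z \<and> real (Suc k) * Re z < real_of_int (fst i) + 1
     \<and> real_of_int (snd i) \<le> real (Suc k) * Im z \<and> real (Suc k) * Im z < real_of_int (snd i) + 1}"
    by (auto simp: GA_def fl_def prod_eq_iff floor_eq_iff)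
  also have "\<dots> \<in> sets borel" by measurable
  finally show ?thesis .
qed

lemma GA_disj: "disjoint_family_on (GA k) I"
  by (auto simp: disjoint_family_on_def GA_def)

lemma sum_GA: assumes "fl k z \<in> GI K k"
  shows "(\<Sum>i\<in>GI K k. f i * indicator (GA k i) z) = (f (fl k z) :: complex)"
proof -
  have "(\<Sum>i\<in>GI K k. f i * indicator (GA k i) z) = (\<Sum>i\<in>GI K k. if i = fl k z then f i else 0)"
    by (intro sum.cong refl) (auto simp: GA_def indicator_def)
  also have "\<dots> = f (fl k z)" using assms GI_finite by simp
  finally show ?thesis .
qed


context pvm begin

lemma meas_mu: "f \<in> borel_measurable borel \<Longrightarrow> f \<in> borel_measurable (mu x)"
  using measurable_cong_sets[OF sets_mu[of x, symmetric] refl] by blast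

lemma indicator_complex: "(indicator A z :: complex) = complex_of_real (indicator A z)"
  by (simp add: indicator_def)

lemma integrable_ind: "A \<in> sets borel \<Longrightarrow> integrable (mu x) (\<lambda>z. (c::complex) * indicator A z)"
  by (rule finite_measure.integrable_const_bound[OF finite_mu, where B="cmod c"])
     (auto simp: indicator_def intro!: meas_mu)

lemma integral_ind: "A \<in> sets borel \<Longrightarrow> integral\<^sup>L (mu x) (\<lambda>z. (c::complex) * indicator A z) = c * complex_of_real ((norm (E A x))\<^sup>2)"
  by (simp add: indicator_complex measure_mu)

lemma quad_Op_int: assumes "part I A"
  shows "cinner x (Op I A c x) = integral\<^sup>L (mu x) (\<lambda>z. \<Sum>i\<in>I. c i * indicator (A i) z)"
proof -
  have b: "A i \<in> sets borel" if "i \<in> I" for i using assms that by (auto simp: part_def)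
  have "integral\<^sup>L (mu x) (\<lambda>z. \<Sum>i\<in>I. c i * indicator (A i) z) = (\<Sum>i\<in>I. integral\<^sup>L (mu x) (\<lambda>z. c i * indicator (A i) z))"
    by (rule Bochner_Integration.integral_sum) (simp add: integrable_ind b)
  also have "\<dots> = (\<Sum>i\<in>I. c i * complex_of_real ((norm (E (A i) x))\<^sup>2))"
  proof (intro sum.cong refl)
    fix i assume "i \<in> I"
    then show "integral\<^sup>L (mu x) (\<lambda>z. c i * indicator (A i) z) = c i * complex_of_real ((norm (E (A i) x))\<^sup>2)"
      using integral_ind[OF b] by blast
  qed
  finally show ?thesis using quad_Op[OF assms] by simp
qed

lemma integrable_sum_ind: assumes "part I A"
  shows "integrable (mu x) (\<lambda>z. \<Sum>i\<in>I. (c i :: complex) * indicator (A i) z)"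
  by (rule Bochner_Integration.integrable_sum, rule integrable_ind) (use assms in \<open>auto simp: part_def\<close>)

end

locale pvmop = pvm E for E :: "complex set \<Rightarrow> 'h::chilbert_space \<Rightarrow> 'h" +
  fixes T :: "'h \<Rightarrow> 'h"
  assumes sm: "spectral_measure_of T E" and bT: "is_bounded_clinear T"
begin

definition Kb where "Kb = (SOME K. K \<ge> 0 \<and> (\<forall>x. norm (T x) \<le> K * norm x))"

lemma Kb: "Kb \<ge> 0" "norm (T x) \<le> Kb * norm x"
proof -
  have "\<exists>K. K \<ge> 0 \<and> (\<forall>x. norm (T x) \<le> K * norm x)" using bclin_bound[OF bT] by metis
  then have "Kb \<ge> 0 \<and> (\<forall>x. norm (T x) \<le> Kb * norm x)" unfolding Kb_def by (rule someI_ex)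
  then show "Kb \<ge> 0" "norm (T x) \<le> Kb * norm x" by auto
qed

lemma linT: "is_clinear T" using bT bclin_clin by blast

lemma D_sub: "op_spectrum T \<subseteq> cball 0 Kb" using spec_bounded[OF bT Kb(2) Kb(1)] .
lemma D_borel: "op_spectrum T \<in> sets borel" using spec_closed[OF bT] by simp
lemma ED: "E (- op_spectrum T) x = 0" using sm by (simp add: spectral_measure_of_def)
lemma quadT: "cinner x (T x) = integral\<^sup>L (mu x) (\<lambda>z. z)"
  using sm by (simp add: spectral_measure_of_def mu_def)

lemma AE_D: "AE z in mu x. z \<in> op_spectrum T"
proof (rule AE_I')
  show "- op_spectrum T \<in> null_sets (mu x)"
    using D_borel by (auto simp: null_sets_def emeasure_mu ED)
qed auto

lemma E_D: "A \<in> sets borel \<Longrightarrow> E A x = E (A \<inter> op_spectrum T) x"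
  using E_null[OF D_borel ED] by blast

lemma part_grid: "part (GI Kb k) (GA k)"
  unfolding part_def
proof (intro conjI allI ballI)
  show "finite (GI Kb k)" by (rule GI_finite)
  show "GA k i \<in> sets borel" for i by (rule GA_borel)
  show "disjoint_family_on (GA k) (GI Kb k)" by (rule GA_disj)
  fix x
  define S where "S = (\<Union>i\<in>GI Kb k. GA k i)"
  have Sb: "S \<in> sets borel" unfolding S_def using GA_borel GI_finite by auto
  have DS: "op_spectrum T \<subseteq> S" unfolding S_def GA_def using D_sub fl_in by fastforce
  have "(\<Sum>i\<in>GI Kb k. E (GA k i) x) = E S x"
    unfolding S_def by (rule E_sum[symmetric]) (auto simp: GI_finite GA_borel GA_disj)
  also have "\<dots> = E (op_spectrum T) x" using E_D[OF Sb] DS by (simp add: Int_absorb1)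
  also have "\<dots> = x" using E_D[of UNIV x] by simp
  finally show "(\<Sum>i\<in>GI Kb k. E (GA k i) x) = x" .
qed

lemma integrable_id: "integrable (mu x) (\<lambda>z. z)"
proof (rule finite_measure.integrable_const_bound[OF finite_mu, where B=Kb])
  show "AE z in mu x. norm z \<le> Kb" using AE_D[of x] by eventually_elim (use D_sub in auto)
qed (simp add: meas_mu)

lemma measure_univ: "measure (mu x) UNIV = (norm x)\<^sup>2" by (simp add: measure_mu)

lemma grid_approx: "norm (T v - Op (GI Kb k) (GA k) (gc k) v) \<le> (8 / real (Suc k)) * norm v"
proof -
  define S where "S = Op (GI Kb k) (GA k) (gc k)"
  define d where "d = 2 / real (Suc k)"
  have linS: "is_clinear S" unfolding S_def by (rule Op_lin[OF part_grid])
  have linR: "is_clinear (\<lambda>v. T v - S v)" using linT linS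
    by (simp add: is_clinear_def scaleC_diff_right)
  have "cmod (cinner w (T w - S w)) \<le> d * (norm w)\<^sup>2" for w
  proof -
    define sg where "sg z = (\<Sum>i\<in>GI Kb k. gc k i * indicator (GA k i) z)" for z
    have isg: "integrable (mu w) sg" unfolding sg_def by (rule integrable_sum_ind[OF part_grid])
    have "cinner w (T w - S w) = integral\<^sup>L (mu w) (\<lambda>z. z - sg z)"
      using quadT[of w] quad_Op_int[OF part_grid, where x=w and c="gc k"] integrable_id[of w] isg
      unfolding sg_def by (simp add: cinner_diff_right S_def Bochner_Integration.integral_diff)
    also have "cmod \<dots> \<le> integral\<^sup>L (mu w) (\<lambda>z. cmod (z - sg z))" by (rule integral_norm_bound)
    also have "\<dots> \<le> integral\<^sup>L (mu w) (\<lambda>z. d)"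
    proof (rule integral_mono_AE)
      show "integrable (mu w) (\<lambda>z. cmod (z - sg z))" using integrable_id isg by auto
      show "integrable (mu w) (\<lambda>z. d)"
        by (rule finite_measure.integrable_const_bound[OF finite_mu, where B="norm d"]) auto
      show "AE z in mu w. cmod (z - sg z) \<le> d"
        using AE_D[of w]
      proof (rule AE_mp, intro AE_I2 impI)
        fix z assume "z \<in> op_spectrum T"
        then have "fl k z \<in> GI Kb k" using D_sub fl_in by auto
        then have "sg z = gc k (fl k z)" unfolding sg_def by (rule sum_GA)
        then show "cmod (z - sg z) \<le> d" using gc_close by (simp add: d_def)
      qed
    qed
    also have "\<dots> = d * (norm w)\<^sup>2" by (simp add: measure_univ)
    finally show ?thesis .
  qed
  from numrad_bound[OF linR this] show ?thesis by (simp add: S_def d_def)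
qed

end

lemma tendsto_by_bound:
  fixes a :: "nat \<Rightarrow> 'a::real_normed_vector"
  assumes "\<And>k. norm (a k - L) \<le> C * (8 / real (Suc k))"
  shows "a \<longlonglongrightarrow> L"
proof -
  have e: "(\<lambda>k. C * (8 / real (Suc k))) \<longlonglongrightarrow> 0"
    using tendsto_mult_right_zero[OF LIMSEQ_inverse_real_of_nat, of 8] 
    by (intro tendsto_mult_right_zero) (simp add: divide_inverse)
  have "(\<lambda>k. a k - L) \<longlonglongrightarrow> 0"
    by (rule Lim_null_comparison[OF _ e]) (use assms in auto)
  then have "(\<lambda>k. (a k - L) + L) \<longlonglongrightarrow> 0 + L" by (intro tendsto_add) auto
  then show ?thesis by simp
qed

context pvmop begin

definition Sk where "Sk k = Op (GI Kb k) (GA k) (gc k)"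

lemma Sk_bound: "norm (Sk k v) \<le> (Kb + 8) * norm v"
proof -
  have "norm (Sk k v) \<le> norm (T v) + norm (T v - Sk k v)"
    using norm_triangle_sub[of "Sk k v" "T v"] by (simp add: norm_minus_commute)
  also have "\<dots> \<le> Kb * norm v + 8 * norm v"
  proof (rule add_mono)
    show "norm (T v) \<le> Kb * norm v" by (rule Kb)
    have "norm (T v - Sk k v) \<le> (8 / real (Suc k)) * norm v" unfolding Sk_def by (rule grid_approx)
    also have "\<dots> \<le> 8 * norm v" by (intro mult_right_mono) (auto simp: divide_le_eq)
    finally show "norm (T v - Sk k v) \<le> 8 * norm v" .
  qed
  finally show ?thesis by (simp add: algebra_simps)
qed

lemma T_bound8: "norm (T v) \<le> (Kb + 8) * norm v"
proof -
  have "Kb * norm v \<le> (Kb + 8) * norm v" by (intro mult_right_mono) auto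
  then show ?thesis using Kb(2)[of v] by linarith
qed

lemma powU_tendsto: "(\<lambda>k. (op_exp (Sk k) ^^ m) x) \<longlonglongrightarrow> (op_exp T ^^ m) x"
proof (rule tendsto_by_bound)
  fix k
  define M where "M = Kb + 8"
  have M0: "M \<ge> 0" using Kb(1) by (simp add: M_def)
  have lU: "is_clinear (op_exp T)" by (rule op_exp_lin[OF linT T_bound8]) (simp add: M0[unfolded M_def])
  have bU: "norm (op_exp T v) \<le> exp M * norm v" for v
    unfolding M_def by (rule op_exp_bound[OF T_bound8]) (use Kb(1) in simp)
  have bW: "norm (op_exp (Sk k) v) \<le> exp M * norm v" for v
    unfolding M_def by (rule op_exp_bound[OF Sk_bound]) (use Kb(1) in simp)
  have d: "norm (op_exp T v - op_exp (Sk k) v) \<le> (expd M * (8 / real (Suc k))) * norm v" for v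
  proof -
    have "norm (op_exp T v - op_exp (Sk k) v) \<le> expd M * (8 / real (Suc k)) * norm v"
      unfolding M_def by (rule op_exp_approx[OF linT T_bound8 Sk_bound]) (use Kb(1) grid_approx in \<open>auto simp: Sk_def\<close>)
    then show ?thesis by simp
  qed
  have ed: "expd M \<ge> 0" unfolding expd_def using M0
    by (intro suminf_nonneg expd_summable) auto
  have "norm ((op_exp T ^^ m) x - (op_exp (Sk k) ^^ m) x) \<le> real m * exp M ^ (m - 1) * (expd M * (8 / real (Suc k))) * norm x"
    by (rule pow_approx[OF lU bU bW _ d]) (use ed in auto)
  then show "norm ((op_exp (Sk k) ^^ m) x - (op_exp T ^^ m) x) \<le> (real m * exp M ^ (m - 1) * expd M * norm x) * (8 / real (Suc k))"
    by (simp add: norm_minus_commute mult_ac)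
qed

lemma Wk_pow: "(op_exp (Sk k) ^^ m) x = Op (GI Kb k) (GA k) (\<lambda>i. exp (gc k i) ^ m) x"
proof -
  have "op_exp (Sk k) = Op (GI Kb k) (GA k) (\<lambda>i. exp (gc k i))"
    by (rule ext) (simp add: Sk_def Op_exp[OF part_grid])
  then show ?thesis by (simp add: Op_pow[OF part_grid])
qed

lemma moment: "cinner ((op_exp T ^^ n) x) ((op_exp T ^^ m) x) = integral\<^sup>L (mu x) (\<lambda>z. cnj (exp z ^ n) * exp z ^ m)"
proof -
  define g where "g w = cnj (exp w ^ n) * exp w ^ m" for w
  define sg where "sg k z = (\<Sum>i\<in>GI Kb k. g (gc k i) * indicator (GA k i) z)" for k z
  have gc: "continuous_on UNIV g" unfolding g_def by (intro continuous_intros)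
  have l1: "(\<lambda>k. cinner ((op_exp (Sk k) ^^ n) x) ((op_exp (Sk k) ^^ m) x)) \<longlonglongrightarrow> cinner ((op_exp T ^^ n) x) ((op_exp T ^^ m) x)"
    by (intro tendsto_cinner powU_tendsto)
  have eq: "cinner ((op_exp (Sk k) ^^ n) x) ((op_exp (Sk k) ^^ m) x) = integral\<^sup>L (mu x) (sg k)" for k
  proof -
    have "cinner ((op_exp (Sk k) ^^ n) x) ((op_exp (Sk k) ^^ m) x) =
       (\<Sum>i\<in>GI Kb k. g (gc k i) * complex_of_real ((norm (E (GA k i) x))\<^sup>2))"
      unfolding Wk_pow cinner_Op[OF part_grid] g_def by simp
    also have "\<dots> = cinner x (Op (GI Kb k) (GA k) (\<lambda>i. g (gc k i)) x)"
      by (simp add: quad_Op[OF part_grid])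
    also have "\<dots> = integral\<^sup>L (mu x) (sg k)"
      unfolding sg_def by (rule quad_Op_int[OF part_grid])
    finally show ?thesis .
  qed
  define B where "B = exp (Kb + 2) ^ (n + m)"
  have gb: "cmod (g w) \<le> B" if "cmod w \<le> Kb + 2" for w
  proof -
    have e: "cmod (exp w) \<le> exp (Kb + 2)" using norm_exp[of w] that by (meson exp_le_cancel_iff order.trans)
    have "cmod (g w) = cmod (exp w) ^ (n + m)" by (simp add: g_def norm_mult norm_power power_add)
    also have "\<dots> \<le> B" unfolding B_def using e by (intro power_mono) auto
    finally show ?thesis .
  qed
  have sgD: "sg k z = g (gc k (fl k z))" if "z \<in> op_spectrum T" for k z
    unfolding sg_def using that D_sub fl_in by (intro sum_GA) auto
  have l2: "(\<lambda>k. integral\<^sup>L (mu x) (sg k)) \<longlonglongrightarrow> integral\<^sup>L (mu x) g"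
  proof (rule integral_dominated_convergence[where w="\<lambda>z. B"])
    show "g \<in> borel_measurable (mu x)" using gc by (intro meas_mu borel_measurable_continuous_onI)
    show "sg k \<in> borel_measurable (mu x)" for k
      unfolding sg_def by (rule borel_measurable_integrable[OF integrable_sum_ind[OF part_grid[of k], where c="\<lambda>i. g (gc k i)"]])
    show "integrable (mu x) (\<lambda>z. B)"
      by (rule finite_measure.integrable_const_bound[OF finite_mu, where B="norm B"]) auto
    show "AE z in mu x. (\<lambda>k. sg k z) \<longlonglongrightarrow> g z"
      using AE_D[of x]
    proof eventually_elim
      case (elim z)
      have "(\<lambda>k. gc k (fl k z)) \<longlonglongrightarrow> z"
      proof (rule tendsto_by_bound[where C="1/4"])
        fix k show "norm (gc k (fl k z) - z) \<le> 1 / 4 * (8 / real (Suc k))"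
          using gc_close[of z k] by (simp add: norm_minus_commute)
      qed
      then have "(\<lambda>k. g (gc k (fl k z))) \<longlonglongrightarrow> g z"
      proof -
        have "isCont g z" using gc by (simp add: continuous_on_eq_continuous_at)
        then show ?thesis using isCont_tendsto_compose \<open>(\<lambda>k. gc k (fl k z)) \<longlonglongrightarrow> z\<close> by blast
      qed
      then show ?case using sgD[OF elim] by simp
    qed
    show "AE z in mu x. norm (sg k z) \<le> B" for k
      using AE_D[of x]
    proof eventually_elim
      case (elim z)
      have "cmod (gc k (fl k z)) \<le> cmod z + cmod (gc k (fl k z) - z)" by (rule norm_triangle_sub)
      also have "\<dots> \<le> Kb + 2"
      proof (rule add_mono)
        show "cmod z \<le> Kb" using D_sub elim by auto
        have "cmod (gc k (fl k z) - z) \<le> 2 / real (Suc k)" using gc_close[of z k] by (simp add: norm_minus_commute)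
        also have "\<dots> \<le> 2" by (simp add: divide_le_eq)
        finally show "cmod (gc k (fl k z) - z) \<le> 2" .
      qed
      finally show ?case using sgD[OF elim] gb by simp
    qed
  qed
  have "cinner ((op_exp T ^^ n) x) ((op_exp T ^^ m) x) = integral\<^sup>L (mu x) g"
    using l1 l2 unfolding eq by (rule LIMSEQ_unique)
  then show ?thesis unfolding g_def[abs_def] .
qed

end

locale twomeas =
  fixes M1 M2 :: "complex measure" and R :: real
  assumes f1: "finite_measure M1" and f2: "finite_measure M2"
    and s1: "sets M1 = sets borel" and s2: "sets M2 = sets borel"
    and R1: "AE w in M1. cmod w \<le> R" and R2: "AE w in M2. cmod w \<le> R"
    and mom: "\<And>n m. integral\<^sup>L M1 (\<lambda>w. cnj (w ^ n) * w ^ m) = integral\<^sup>L M2 (\<lambda>w. cnj (w ^ n) * w ^ m)"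
begin

lemma meas_gen:
  assumes "sets M = sets borel" "f \<in> borel_measurable borel" shows "f \<in> borel_measurable M"
  using measurable_cong_sets[OF assms(1) refl] assms(2) by blast

lemma int_cont:
  fixes g :: "complex \<Rightarrow> 'b::{banach,second_countable_topology}"
  assumes M: "M = M1 \<or> M = M2" and g: "continuous_on UNIV g"
  shows "integrable M g"
proof -
  have "compact (g ` cball 0 R)" by (intro compact_continuous_image continuous_on_subset[OF g]) auto
  then have "bounded (g ` cball 0 R)" by (rule compact_imp_bounded)
  then obtain B where "\<forall>y\<in>g ` cball 0 R. norm y \<le> B" by (auto simp: bounded_iff)
  then have B: "\<And>w. w \<in> cball 0 R \<Longrightarrow> norm (g w) \<le> B" by blast
  have fm: "finite_measure M" and sM: "sets M = sets borel" and AR: "AE w in M. cmod w \<le> R"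
    using M f1 f2 s1 s2 R1 R2 by auto
  show ?thesis
  proof (rule finite_measure.integrable_const_bound[OF fm, where B=B])
    show "AE w in M. norm (g w) \<le> B" using AR by eventually_elim (auto intro: B)
    show "g \<in> borel_measurable M" using g by (intro meas_gen[OF sM] borel_measurable_continuous_onI)
  qed
qed

definition good :: "(complex \<Rightarrow> complex) \<Rightarrow> bool" where
  "good g \<longleftrightarrow> continuous_on UNIV g \<and>
     (\<forall>n m. integral\<^sup>L M1 (\<lambda>w. g w * (cnj (w ^ n) * w ^ m)) = integral\<^sup>L M2 (\<lambda>w. g w * (cnj (w ^ n) * w ^ m)))"

lemma cont_mon: "continuous_on UNIV (\<lambda>w::complex. cnj (w ^ n) * w ^ m)"
  by (intro continuous_intros)

lemma good_1: "good (\<lambda>w. 1)"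
  unfolding good_def using mom by (simp add: continuous_on_const)

lemma good_shift1: assumes "good g" shows "good (\<lambda>w. w * g w)"
  unfolding good_def
proof (intro conjI allI)
  show "continuous_on UNIV (\<lambda>w. w * g w)" using assms unfolding good_def by (intro continuous_intros) auto
  fix n m
  have e: "(\<lambda>w. w * g w * (cnj (w ^ n) * w ^ m)) = (\<lambda>w. g w * (cnj (w ^ n) * w ^ Suc m))"
    by (rule ext) (simp add: mult_ac)
  show "integral\<^sup>L M1 (\<lambda>w. w * g w * (cnj (w ^ n) * w ^ m)) = integral\<^sup>L M2 (\<lambda>w. w * g w * (cnj (w ^ n) * w ^ m))"
    unfolding e using assms unfolding good_def by blast
qed

lemma good_shift2: assumes "good g" shows "good (\<lambda>w. cnj w * g w)"
  unfolding good_def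
proof (intro conjI allI)
  show "continuous_on UNIV (\<lambda>w. cnj w * g w)" using assms unfolding good_def by (intro continuous_intros) auto
  fix n m
  have e: "(\<lambda>w. cnj w * g w * (cnj (w ^ n) * w ^ m)) = (\<lambda>w. g w * (cnj (w ^ Suc n) * w ^ m))"
    by (rule ext) (simp add: mult_ac)
  show "integral\<^sup>L M1 (\<lambda>w. cnj w * g w * (cnj (w ^ n) * w ^ m)) = integral\<^sup>L M2 (\<lambda>w. cnj w * g w * (cnj (w ^ n) * w ^ m))"
    unfolding e using assms unfolding good_def by blast
qed

lemma good_add: assumes "good g" "good h" shows "good (\<lambda>w. g w + h w)"
  unfolding good_def
proof (intro conjI allI)
  have cg: "continuous_on UNIV g" and ch: "continuous_on UNIV h" using assms unfolding good_def by auto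
  show "continuous_on UNIV (\<lambda>w. g w + h w)" using cg ch by (intro continuous_intros)
  fix n m
  have i: "integrable M (\<lambda>w. f w * (cnj (w ^ n) * w ^ m))" if "M = M1 \<or> M = M2" "continuous_on UNIV f" for M f
    using that by (intro int_cont continuous_intros) auto
  have e: "(\<lambda>w. (g w + h w) * (cnj (w ^ n) * w ^ m)) = (\<lambda>w. g w * (cnj (w ^ n) * w ^ m) + h w * (cnj (w ^ n) * w ^ m))"
    by (rule ext) (simp add: algebra_simps)
  show "integral\<^sup>L M1 (\<lambda>w. (g w + h w) * (cnj (w ^ n) * w ^ m)) = integral\<^sup>L M2 (\<lambda>w. (g w + h w) * (cnj (w ^ n) * w ^ m))"
    unfolding e
    using assms i[of M1 g] i[of M1 h] i[of M2 g] i[of M2 h] cg ch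
    by (simp add: Bochner_Integration.integral_add good_def)
qed

lemma good_scale: assumes "good g" shows "good (\<lambda>w. c * g w)"
  unfolding good_def
proof (intro conjI allI)
  show "continuous_on UNIV (\<lambda>w. c * g w)" using assms unfolding good_def by (intro continuous_intros) auto
  fix n m
  have e: "(\<lambda>w. c * g w * (cnj (w ^ n) * w ^ m)) = (\<lambda>w. c * (g w * (cnj (w ^ n) * w ^ m)))"
    by (rule ext) (simp add: mult_ac)
  show "integral\<^sup>L M1 (\<lambda>w. c * g w * (cnj (w ^ n) * w ^ m)) = integral\<^sup>L M2 (\<lambda>w. c * g w * (cnj (w ^ n) * w ^ m))"
    unfolding e using assms unfolding good_def by simp
qed

lemma linear_decomp:
  assumes "bounded_linear (p :: complex \<Rightarrow> real)"
  shows "complex_of_real (p w) = ((p 1 - \<i> * p \<i>) / 2) * w + ((p 1 + \<i> * p \<i>) / 2) * cnj w"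
proof -
  interpret bounded_linear p by fact
  have "p w = p (Re w *\<^sub>R 1 + Im w *\<^sub>R \<i>)" by (rule arg_cong[where f=p]) (simp add: complex_eq_iff)
  also have "\<dots> = Re w * p 1 + Im w * p \<i>" by (simp add: add scale)
  finally have "p w = Re w * p 1 + Im w * p \<i>" .
  then show ?thesis by (simp add: complex_eq_iff algebra_simps) (simp add: field_simps)
qed

lemma good_poly: "real_polynomial_function p \<Longrightarrow> good g \<Longrightarrow> good (\<lambda>w. complex_of_real (p w) * g w)"
proof (induction p arbitrary: g rule: real_polynomial_function.induct)
  case (linear p)
  have e: "(\<lambda>w. complex_of_real (p w) * g w) = (\<lambda>w. ((p 1 - \<i> * p \<i>) / 2) * (w * g w) + ((p 1 + \<i> * p \<i>) / 2) * (cnj w * g w))"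
  proof (rule ext)
    fix w show "complex_of_real (p w) * g w = ((p 1 - \<i> * p \<i>) / 2) * (w * g w) + ((p 1 + \<i> * p \<i>) / 2) * (cnj w * g w)"
      unfolding linear_decomp[OF linear(1), of w] by (simp add: algebra_simps)
  qed
  show ?case unfolding e using linear(2) by (intro good_add good_scale good_shift1 good_shift2)
next
  case (const c)
  then show ?case by (rule good_scale)
next
  case (add f1 f2)
  have e: "(\<lambda>w. complex_of_real (f1 w + f2 w) * g w) = (\<lambda>w. complex_of_real (f1 w) * g w + complex_of_real (f2 w) * g w)"
    by (rule ext) (simp add: algebra_simps)
  show ?case unfolding e using add by (intro good_add) auto
next
  case (mult f1 f2)
  have e: "(\<lambda>w. complex_of_real (f1 w * f2 w) * g w) = (\<lambda>w. complex_of_real (f1 w) * (complex_of_real (f2 w) * g w))"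
    by (rule ext) (simp add: algebra_simps)
  show ?case unfolding e using mult by auto
qed

lemma poly_eq: assumes "real_polynomial_function p"
  shows "integral\<^sup>L M1 p = integral\<^sup>L M2 p"
proof -
  have "good (\<lambda>w. complex_of_real (p w) * 1)" by (rule good_poly[OF assms good_1])
  then have "\<forall>n m. integral\<^sup>L M1 (\<lambda>w. complex_of_real (p w) * 1 * (cnj (w ^ n) * w ^ m)) =
     integral\<^sup>L M2 (\<lambda>w. complex_of_real (p w) * 1 * (cnj (w ^ n) * w ^ m))"
    unfolding good_def by blast
  from this[rule_format, of 0 0] show ?thesis by simp
qed

end

context twomeas begin

lemma int_diff_bound:
  fixes f p :: "complex \<Rightarrow> real"
  assumes M: "M = M1 \<or> M = M2" and cf: "continuous_on UNIV f" and cp: "continuous_on UNIV p"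
    and b: "\<And>w. w \<in> cball 0 R \<Longrightarrow> \<bar>f w - p w\<bar> < e"
  shows "\<bar>integral\<^sup>L M f - integral\<^sup>L M p\<bar> \<le> e * measure M (space M)"
proof -
  have fm: "finite_measure M" and AR: "AE w in M. cmod w \<le> R" using M f1 f2 R1 R2 by auto
  have i1: "integrable M f" "integrable M p" using int_cont[OF M] cf cp by auto
  have "\<bar>integral\<^sup>L M f - integral\<^sup>L M p\<bar> = \<bar>integral\<^sup>L M (\<lambda>w. f w - p w)\<bar>"
    using i1 by simp
  also have "\<dots> \<le> integral\<^sup>L M (\<lambda>w. \<bar>f w - p w\<bar>)" by (rule integral_abs_bound)
  also have "\<dots> \<le> integral\<^sup>L M (\<lambda>w. e)"
  proof (rule integral_mono_AE)
    show "integrable M (\<lambda>w. \<bar>f w - p w\<bar>)" using i1 by auto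
    show "integrable M (\<lambda>w. e)" by (rule finite_measure.integrable_const_bound[OF fm, where B="norm e"]) auto
    show "AE w in M. \<bar>f w - p w\<bar> \<le> e" using AR by eventually_elim (rule less_imp_le, rule b, simp)
  qed
  also have "\<dots> = e * measure M (space M)" by simp
  finally show ?thesis .
qed

lemma cont_eq:
  fixes f :: "complex \<Rightarrow> real"
  assumes cf: "continuous_on UNIV f"
  shows "integral\<^sup>L M1 f = integral\<^sup>L M2 f"
proof -
  define C where "C = measure M1 (space M1) + measure M2 (space M2)"
  have C0: "C \<ge> 0" by (simp add: C_def)
  have "\<bar>integral\<^sup>L M1 f - integral\<^sup>L M2 f\<bar> \<le> e * C" if e: "e > 0" for e
  proof -
    obtain p where p: "real_polynomial_function p" "\<And>w. w \<in> cball 0 R \<Longrightarrow> \<bar>f w - p w\<bar> < e"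
      using Stone_Weierstrass_real_polynomial_function[of "cball 0 R" f e] cf e
      by (auto intro: continuous_on_subset)
    have cp: "continuous_on UNIV p"
      using p(1) by (simp add: continuous_at_imp_continuous_on continuous_real_polymonial_function)
    have a: "\<bar>integral\<^sup>L M1 f - integral\<^sup>L M1 p\<bar> \<le> e * measure M1 (space M1)"
      by (rule int_diff_bound[OF _ cf cp p(2)]) auto
    have b: "\<bar>integral\<^sup>L M2 f - integral\<^sup>L M2 p\<bar> \<le> e * measure M2 (space M2)"
      by (rule int_diff_bound[OF _ cf cp p(2)]) auto
    have "integral\<^sup>L M1 p = integral\<^sup>L M2 p" by (rule poly_eq[OF p(1)])
    then show ?thesis using a b by (simp add: C_def algebra_simps)
  qed
  then have "\<bar>integral\<^sup>L M1 f - integral\<^sup>L M2 f\<bar> \<le> 0"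
  proof (cases "C = 0")
    case True then show ?thesis using \<open>\<And>e. e > 0 \<Longrightarrow> _\<close>[of 1] by simp
  next
    case False
    then have Cp: "C > 0" using C0 by simp
    show ?thesis
    proof (rule field_le_epsilon)
      fix e :: real assume "e > 0"
      then have "\<bar>integral\<^sup>L M1 f - integral\<^sup>L M2 f\<bar> \<le> (e / C) * C"
        using \<open>\<And>e. e > 0 \<Longrightarrow> _\<close>[of "e / C"] Cp by simp
      then show "\<bar>integral\<^sup>L M1 f - integral\<^sup>L M2 f\<bar> \<le> 0 + e" using Cp by simp
    qed
  qed
  then show ?thesis by simp
qed

lemma closed_eq:
  assumes F: "closed F"
  shows "measure M1 F = measure M2 F"
proof (cases "F = {}")
  case True then show ?thesis by simp
next
  case False
  define h where "h j w = max 0 (1 - real j * infdist w F)" for j w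
  have ch: "continuous_on UNIV (h j)" for j unfolding h_def by (intro continuous_intros)
  have lim: "(\<lambda>j. h j w) \<longlonglongrightarrow> indicator F w" for w
  proof (cases "w \<in> F")
    case True
    then have "h j w = 1" for j by (simp add: h_def)
    then show ?thesis using True by simp
  next
    case nF: False
    have d: "infdist w F > 0" using infdist_pos_not_in_closed[OF F False nF] by auto
    obtain N where N: "real N > 1 / infdist w F" using reals_Archimedean2 by blast
    have "h j w = 0" if "j \<ge> N" for j
    proof -
      have "real j \<ge> real N" using that by simp
      then have "real N * infdist w F \<le> real j * infdist w F" using d by (intro mult_right_mono) auto
      moreover have "real N * infdist w F > 1" using N d by (simp add: field_simps)
      ultimately have "real j * infdist w F > 1" by linarith
      then show ?thesis by (simp add: h_def)
    qed
    then have "eventually (\<lambda>j. h j w = 0) sequentially" by (auto simp: eventually_sequentially)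
    then have "(\<lambda>j. h j w) \<longlonglongrightarrow> 0" by (rule tendsto_eventually)
    then show ?thesis using nF by simp
  qed
  have conv: "(\<lambda>j. integral\<^sup>L M (h j)) \<longlonglongrightarrow> measure M F" if M: "M = M1 \<or> M = M2" for M
  proof -
    have fm: "finite_measure M" and sM: "sets M = sets borel" using M f1 f2 s1 s2 by auto
    have "(\<lambda>j. integral\<^sup>L M (h j)) \<longlonglongrightarrow> integral\<^sup>L M (indicator F)"
    proof (rule integral_dominated_convergence[where w="\<lambda>w. 1"])
      show "indicator F \<in> borel_measurable M" using F by (intro meas_gen[OF sM]) (simp add: borel_measurable_indicator_iff)
      show "h j \<in> borel_measurable M" for j using ch by (intro meas_gen[OF sM] borel_measurable_continuous_onI)
      show "integrable M (\<lambda>w. 1::real)" by (rule finite_measure.integrable_const_bound[OF fm, where B=1]) auto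
      show "AE w in M. (\<lambda>j. h j w) \<longlonglongrightarrow> indicator F w" using lim by simp
      show "AE w in M. norm (h j w) \<le> 1" for j by (auto simp: h_def infdist_nonneg)
    qed
    moreover have "integral\<^sup>L M (indicator F) = measure M F"
      using sM F by (simp add: sets.Int_space_eq2[symmetric] Int_absorb2)
    ultimately show ?thesis by simp
  qed
  have "integral\<^sup>L M1 (h j) = integral\<^sup>L M2 (h j)" for j by (rule cont_eq[OF ch])
  then have "(\<lambda>j. integral\<^sup>L M1 (h j)) = (\<lambda>j. integral\<^sup>L M2 (h j))" by (rule ext)
  then have "(\<lambda>j. integral\<^sup>L M2 (h j)) \<longlonglongrightarrow> measure M1 F" using conv[of M1] by simp
  then show ?thesis using conv[of M2, OF disjI2[OF refl]] by (rule LIMSEQ_unique)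
qed

lemma meas_eq: "M1 = M2"
proof (rule measure_eqI_generator_eq[where E="Collect closed" and \<Omega>=UNIV and A="\<lambda>i. UNIV"])
  show "Int_stable (Collect closed)" by (auto simp: Int_stable_def)
  show "Collect closed \<subseteq> Pow UNIV" by auto
  have sb: "sets (borel :: complex measure) = sigma_sets UNIV (Collect closed)"
    by (metis borel_eq_closed sets_measure_of top_greatest Pow_UNIV)
  show "sets M1 = sigma_sets UNIV (Collect closed)" using s1 sb by simp
  show "sets M2 = sigma_sets UNIV (Collect closed)" using s2 sb by simp
  fix X :: "complex set" assume "X \<in> Collect closed"
  then have c: "closed X" by simp
  have "X \<in> sets M1" "X \<in> sets M2" using c s1 s2 by auto
  then show "emeasure M1 X = emeasure M2 X"
    using closed_eq[OF c] finite_measure.emeasure_eq_measure[OF f1] finite_measure.emeasure_eq_measure[OF f2]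
    by simp
next
  show "range (\<lambda>i. UNIV) \<subseteq> Collect closed" by auto
  show "(\<Union>i. UNIV) = UNIV" by simp
  show "emeasure M1 UNIV \<noteq> \<infinity>" for i :: nat
  proof -
    have "space M1 = UNIV" using sets_eq_imp_space_eq[OF s1] by simp
    then show ?thesis using finite_measure.emeasure_finite[OF f1, of UNIV] by simp
  qed
qed

end

definition phi :: "complex \<Rightarrow> complex" where
  "phi w = (if w \<in> \<real>\<^sub>\<le>\<^sub>0 then complex_of_real (ln (cmod w)) else Ln w)"

lemma phi_strip:
  assumes a: "(2 * of_int k - 1) * pi < Im z" and b: "Im z < (2 * of_int k + 1) * pi"
  shows "phi (exp z) = z - complex_of_real (2 * of_int k * pi) * \<i>"
proof -
  define w where "w = z - complex_of_real (2 * of_int k * pi) * \<i>"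
  have Imw: "Im w = Im z - 2 * of_int k * pi" by (simp add: w_def)
  have w1: "- pi < Im w" "Im w < pi" using a b by (simp_all add: Imw algebra_simps)
  have "z = w + \<i> * (of_int k * (of_real pi * 2))" by (simp add: w_def complex_eq_iff)
  then have ez: "exp z = exp w" by simp
  have nn: "exp w \<notin> \<real>\<^sub>\<le>\<^sub>0"
  proof
    assume "exp w \<in> \<real>\<^sub>\<le>\<^sub>0"
    then have "Im (exp w) = 0" "Re (exp w) \<le> 0" by (auto simp: complex_nonpos_Reals_iff)
    then have "sin (Im w) = 0" "cos (Im w) \<le> 0" by (auto simp: Im_exp Re_exp mult_le_0_iff)
    then have "Im w = 0" using sin_eq_0_pi w1 by blast
    then show False using \<open>cos (Im w) \<le> 0\<close> by simp
  qed
  have "phi (exp z) = Ln (exp w)" using nn by (simp add: phi_def ez)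
  also have "\<dots> = w" using w1 by simp
  finally show ?thesis by (simp add: w_def)
qed

lemma phi_line:
  assumes a: "Im z = (2 * of_int k + 1) * pi"
  shows "phi (exp z) = z - complex_of_real ((2 * of_int k + 1) * pi) * \<i>"
proof -
  have "cos (Im z) = cos (pi * of_int (2 * k + 1))" using a by (simp add: mult.commute)
  also have "\<dots> = - 1" by (simp only: cos_npi_int) simp
  finally have c: "cos (Im z) = - 1" .
  have "sin (Im z) = sin (pi * of_int (2 * k + 1))" using a by (simp add: mult.commute)
  also have "\<dots> = 0" by (rule sin_npi_int)
  finally have s: "sin (Im z) = 0" .
  have "exp z \<in> \<real>\<^sub>\<le>\<^sub>0" by (simp add: complex_nonpos_Reals_iff Re_exp Im_exp c s)
  then have "phi (exp z) = complex_of_real (Re z)" by (simp add: phi_def)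
  also have "\<dots> = z - complex_of_real ((2 * of_int k + 1) * pi) * \<i>" by (simp add: complex_eq_iff a)
  finally show ?thesis .
qed

definition Ss :: "int \<Rightarrow> complex set" where
  "Ss k = {z. (2 * of_int k - 1) * pi < Im z \<and> Im z < (2 * of_int k + 1) * pi}"
definition Ls :: "int \<Rightarrow> complex set" where
  "Ls k = {z. Im z = (2 * of_int k + 1) * pi}"
definition cS :: "int \<Rightarrow> complex" where "cS k = complex_of_real (2 * of_int k * pi) * \<i>"
definition cL :: "int \<Rightarrow> complex" where "cL k = complex_of_real ((2 * of_int k + 1) * pi) * \<i>"

lemma pi_lt: "(a::real) * pi < b * pi \<longleftrightarrow> a < b" by simp
lemma pi_le: "(a::real) * pi \<le> b * pi \<longleftrightarrow> a \<le> b" by simp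

lemma gsum:
  assumes lo: "(2 * of_int k0 + 1) * pi \<le> Im z" and hi: "Im z \<le> (2 * of_int k1 + 1) * pi"
  shows "z - (\<Sum>k\<in>{k0..k1}. cS k * indicator (Ss k) z + cL k * indicator (Ls k) z) = phi (exp z)"
proof -
  define t where "t = Im z / pi"
  have zt: "Im z = t * pi" by (simp add: t_def)
  have lo': "2 * of_int k0 + 1 \<le> t" and hi': "t \<le> 2 * of_int k1 + 1"
    using lo hi unfolding zt pi_le by auto
  define j where "j = \<lfloor>(t + 1) / 2\<rfloor>"
  have f1: "real_of_int j \<le> (t + 1) / 2" unfolding j_def by (rule of_int_floor_le)
  have f2: "(t + 1) / 2 < real_of_int j + 1" unfolding j_def by (rule real_of_int_floor_add_one_gt)
  have j1a: "2 * of_int j - 1 \<le> t" using f1 by (simp add: field_simps)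
  have j1b: "t < 2 * of_int j + 1" using f2 by (simp add: field_simps)
  note j1 = j1a j1b
  show ?thesis
  proof (cases "t = 2 * of_int j - 1")
    case True
    define k where "k = j - 1"
    have tk: "t = 2 * of_int k + 1" using True by (simp add: k_def)
    have kin: "k \<in> {k0..k1}"
    proof -
      have "2 * of_int k0 + 1 \<le> 2 * (of_int k :: real) + 1" "2 * (of_int k :: real) + 1 \<le> 2 * of_int k1 + 1"
        using lo' hi' tk by auto
      then show ?thesis by simp
    qed
    have iS: "indicator (Ss i) z = (0::complex)" for i
    proof -
      have "\<not> (2 * of_int i - 1 < t \<and> t < 2 * of_int i + 1)"
      proof
        assume h: "2 * of_int i - 1 < t \<and> t < 2 * of_int i + 1"
        then have "real_of_int (2 * i - 1) < of_int (2 * k + 1)" "real_of_int (2 * k + 1) < of_int (2 * i + 1)"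
          using tk by auto
        then have "2 * i - 1 < 2 * k + 1" "2 * k + 1 < 2 * i + 1" by (simp only: of_int_less_iff)+
        then show False by presburger
      qed
      then show ?thesis by (auto simp: Ss_def zt pi_lt indicator_def)
    qed
    have iL: "indicator (Ls i) z = (if i = k then 1 else 0 :: complex)" for i
    proof -
      have "(t = 2 * of_int i + 1) \<longleftrightarrow> i = k"
      proof
        assume "t = 2 * of_int i + 1"
        then have "real_of_int i = of_int k" using tk by simp
        then show "i = k" by simp
      qed (simp add: tk)
      then show ?thesis by (auto simp: Ls_def zt indicator_def)
    qed
    have "(\<Sum>k\<in>{k0..k1}. cS k * indicator (Ss k) z + cL k * indicator (Ls k) z) = (\<Sum>i\<in>{k0..k1}. if i = k then cL k else 0)"
      by (intro sum.cong refl) (simp add: iS iL)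
    also have "\<dots> = cL k" using kin by simp
    finally show ?thesis using phi_line[of z k] tk zt by (simp add: cL_def)
  next
    case False
    then have j2: "2 * of_int j - 1 < t" using j1 by simp
    have jin: "j \<in> {k0..k1}"
    proof -
      have "real_of_int (2 * k0 + 1) < of_int (2 * j + 1)" "real_of_int (2 * j - 1) < of_int (2 * k1 + 1)"
        using lo' hi' j1 j2 by auto
      then have "2 * k0 + 1 < 2 * j + 1" "2 * j - 1 < 2 * k1 + 1" by (simp only: of_int_less_iff)+
      then show ?thesis by simp
    qed
    have iS: "indicator (Ss i) z = (if i = j then 1 else 0 :: complex)" for i
    proof -
      have "(2 * of_int i - 1 < t \<and> t < 2 * of_int i + 1) \<longleftrightarrow> i = j"
      proof
        assume h: "2 * of_int i - 1 < t \<and> t < 2 * of_int i + 1"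
        then have "real_of_int (2 * i - 1) < of_int (2 * j + 1)" "real_of_int (2 * j - 1) < of_int (2 * i + 1)"
          using j1 j2 by auto
        then have "2 * i - 1 < 2 * j + 1" "2 * j - 1 < 2 * i + 1" by (simp only: of_int_less_iff)+
        then show "i = j" by presburger
      qed (use j1 j2 in auto)
      then show ?thesis by (auto simp: Ss_def zt pi_lt indicator_def)
    qed
    have iL: "indicator (Ls i) z = (0::complex)" for i
    proof -
      have "t \<noteq> 2 * of_int i + 1"
      proof
        assume "t = 2 * of_int i + 1"
        then have "real_of_int (2 * j - 1) < of_int (2 * i + 1)" "real_of_int (2 * i + 1) < of_int (2 * j + 1)"
          using j1 j2 by auto
        then have "2 * j - 1 < 2 * i + 1" "2 * i + 1 < 2 * j + 1" by (simp only: of_int_less_iff)+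
        then show False by presburger
      qed
      then show ?thesis by (auto simp: Ls_def zt indicator_def)
    qed
    have "(\<Sum>k\<in>{k0..k1}. cS k * indicator (Ss k) z + cL k * indicator (Ls k) z) = (\<Sum>i\<in>{k0..k1}. if i = j then cS j else 0)"
      by (intro sum.cong refl) (simp add: iS iL)
    also have "\<dots> = cS j" using jin by simp
    finally show ?thesis using phi_strip[of j z] j1 j2 zt by (simp add: cS_def)
  qed
qed

lemma phi_meas: "phi \<in> borel_measurable borel"
proof -
  have e: "phi = (\<lambda>w. (if w \<in> \<real>\<^sub>\<le>\<^sub>0 then complex_of_real (ln (cmod w)) else 0) + (if w \<in> \<real>\<^sub>\<le>\<^sub>0 then 0 else Ln w))"
    by (rule ext) (simp add: phi_def)
  have m1: "(\<lambda>w. if w \<in> \<real>\<^sub>\<le>\<^sub>0 then 0 else Ln w) \<in> borel_measurable borel"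
    by (rule borel_measurable_continuous_on_if) (auto intro!: continuous_on_Ln continuous_intros)
  have m2: "(\<lambda>w::complex. if w \<in> \<real>\<^sub>\<le>\<^sub>0 then complex_of_real (ln (cmod w)) else 0) \<in> borel_measurable borel"
    by (rule measurable_If_set) auto
  show ?thesis unfolding e using m1 m2 by measurable
qed

lemma Ss_borel: "Ss k \<in> sets borel" unfolding Ss_def by measurable
lemma Ls_borel: "Ls k \<in> sets borel" unfolding Ls_def by measurable


lemma clin_diff_fun: "is_clinear f \<Longrightarrow> is_clinear g \<Longrightarrow> is_clinear (\<lambda>v. f v - g v)"
  by (simp add: is_clinear_def scaleC_diff_right)
lemma clin_add_fun: "is_clinear f \<Longrightarrow> is_clinear g \<Longrightarrow> is_clinear (\<lambda>v. f v + g v)"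
  by (simp add: is_clinear_def scaleC_add_right)
lemma clin_scale_fun: "is_clinear f \<Longrightarrow> is_clinear (\<lambda>v. c *\<^sub>C f v)"
  by (simp add: is_clinear_def scaleC_add_right scaleC_scaleC mult.commute)
lemma clin_sum_fun: "(\<And>k. k \<in> K \<Longrightarrow> is_clinear (f k)) \<Longrightarrow> is_clinear (\<lambda>v. \<Sum>k\<in>K. f k v)"
  unfolding is_clinear_def by (simp add: sum.distrib scaleC_sum_right)

context pvmop begin

lemma qform:
  assumes strip: "op_spectrum T \<subseteq> {z. (2 * of_int k0 + 1) * pi \<le> Im z \<and> Im z \<le> (2 * of_int k1 + 1) * pi}"
  shows "cinner v (T v) - (\<Sum>k\<in>{k0..k1}. cS k * complex_of_real ((norm (E (Ss k) v))\<^sup>2) + cL k * complex_of_real ((norm (E (Ls k) v))\<^sup>2))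
     = integral\<^sup>L (mu v) (\<lambda>z. phi (exp z))"
proof -
  define gg where "gg z = (\<Sum>k\<in>{k0..k1}. cS k * indicator (Ss k) z + cL k * indicator (Ls k) z)" for z
  have ig: "integrable (mu v) gg" unfolding gg_def
    by (intro Bochner_Integration.integrable_sum Bochner_Integration.integrable_add integrable_ind Ss_borel Ls_borel)
  have "integral\<^sup>L (mu v) gg = (\<Sum>k\<in>{k0..k1}. integral\<^sup>L (mu v) (\<lambda>z. cS k * indicator (Ss k) z + cL k * indicator (Ls k) z))"
    unfolding gg_def
    by (rule Bochner_Integration.integral_sum) (intro Bochner_Integration.integrable_add integrable_ind Ss_borel Ls_borel)
  also have "\<dots> = (\<Sum>k\<in>{k0..k1}. cS k * complex_of_real ((norm (E (Ss k) v))\<^sup>2) + cL k * complex_of_real ((norm (E (Ls k) v))\<^sup>2))"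
  proof (intro sum.cong refl)
    fix k
    show "integral\<^sup>L (mu v) (\<lambda>z. cS k * indicator (Ss k) z + cL k * indicator (Ls k) z) =
      cS k * complex_of_real ((norm (E (Ss k) v))\<^sup>2) + cL k * complex_of_real ((norm (E (Ls k) v))\<^sup>2)"
      using integral_ind[OF Ss_borel, of v "cS k" k] integral_ind[OF Ls_borel, of v "cL k" k]
        integrable_ind[OF Ss_borel, of v "cS k" k] integrable_ind[OF Ls_borel, of v "cL k" k]
      by (simp only: Bochner_Integration.integral_add)
  qed
  finally have e1: "integral\<^sup>L (mu v) gg = (\<Sum>k\<in>{k0..k1}. cS k * complex_of_real ((norm (E (Ss k) v))\<^sup>2) + cL k * complex_of_real ((norm (E (Ls k) v))\<^sup>2))" .
  have "cinner v (T v) - integral\<^sup>L (mu v) gg = integral\<^sup>L (mu v) (\<lambda>z. z - gg z)"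
    using quadT[of v] integrable_id[of v] ig by (simp add: Bochner_Integration.integral_diff)
  also have "\<dots> = integral\<^sup>L (mu v) (\<lambda>z. phi (exp z))"
  proof (rule integral_cong_AE)
    show "(\<lambda>z. z - gg z) \<in> borel_measurable (mu v)"
      by (rule borel_measurable_integrable[OF Bochner_Integration.integrable_diff[OF integrable_id ig]])
    show "(\<lambda>z. phi (exp z)) \<in> borel_measurable (mu v)"
      by (intro meas_mu measurable_compose[OF _ phi_meas] borel_measurable_continuous_onI continuous_intros)
    show "AE z in mu v. z - gg z = phi (exp z)"
      using AE_D[of v]
    proof eventually_elim
      case (elim z)
      then show ?case using strip unfolding gg_def by (intro gsum) auto
    qed
  qed
  finally show ?thesis using e1 by simp
qed

definition N where "N v = distr (mu v) borel exp"

lemma exp_meas: "(exp :: complex \<Rightarrow> complex) \<in> borel_measurable borel"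
  by (intro borel_measurable_continuous_onI continuous_intros)

lemma N_props: "finite_measure (N v)" "sets (N v) = sets borel" "AE w in N v. cmod w \<le> exp Kb"
proof -
  have em: "exp \<in> measurable (mu v) borel" using exp_meas by (rule meas_mu)
  show "finite_measure (N v)" unfolding N_def using finite_mu em by (rule finite_measure.finite_measure_distr)
  show "sets (N v) = sets borel" by (simp add: N_def)
  show "AE w in N v. cmod w \<le> exp Kb" unfolding N_def
  proof (subst AE_distr_iff[OF em])
    show "{x \<in> space borel. cmod x \<le> exp Kb} \<in> sets borel" by measurable
    show "AE x in mu v. cmod (exp x) \<le> exp Kb"
      using AE_D[of v]
    proof eventually_elim
      case (elim z)
      then have "cmod z \<le> Kb" using D_sub by auto
      then have "Re z \<le> Kb" using abs_Re_le_cmod[of z] by linarith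
      then show ?case by simp
    qed
  qed
qed

lemma N_int: fixes f :: "complex \<Rightarrow> complex" shows "f \<in> borel_measurable borel \<Longrightarrow> integral\<^sup>L (N v) f = integral\<^sup>L (mu v) (\<lambda>z. f (exp z))"
  unfolding N_def by (rule integral_distr[OF meas_mu[OF exp_meas]])

lemma N_moment: "integral\<^sup>L (N v) (\<lambda>w. cnj (w ^ n) * w ^ m) = cinner ((op_exp T ^^ n) v) ((op_exp T ^^ m) v)"
proof -
  have c: "continuous_on UNIV (\<lambda>w::complex. cnj (w ^ n) * w ^ m)" by (intro continuous_intros)
  show ?thesis by (subst N_int[OF borel_measurable_continuous_onI[OF c]]) (simp only: moment)
qed

end

lemma main:
  fixes X Y :: "'h::chilbert_space \<Rightarrow> 'h"
    and E_X E_Y :: "complex set \<Rightarrow> 'h \<Rightarrow> 'h"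
    and k0 k1 :: int
  assumes nX: "is_normal_op X" and nY: "is_normal_op Y"
    and ee: "op_exp X = op_exp Y"
    and smX: "spectral_measure_of X E_X" and smY: "spectral_measure_of Y E_Y"
    and sX: "op_spectrum X \<subseteq> {z. (2 * of_int k0 + 1) * pi \<le> Im z \<and> Im z \<le> (2 * of_int k1 + 1) * pi}"
    and sY: "op_spectrum Y \<subseteq> {z. (2 * of_int k0 + 1) * pi \<le> Im z \<and> Im z \<le> (2 * of_int k1 + 1) * pi}"
  shows "X v - Y v = (\<Sum>k\<in>{k0..k1}. cS k *\<^sub>C (E_X (Ss k) v - E_Y (Ss k) v) + cL k *\<^sub>C (E_X (Ls k) v - E_Y (Ls k) v))"
proof -
  have bX: "is_bounded_clinear X" using nX by (simp add: is_normal_op_def)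
  have bY: "is_bounded_clinear Y" using nY by (simp add: is_normal_op_def)
  interpret X: pvmop E_X X using smX bX by (simp add: pvmop_def pvmop_axioms_def spectral_measure_pvm)
  interpret Y: pvmop E_Y Y using smY bY by (simp add: pvmop_def pvmop_axioms_def spectral_measure_pvm)
  define R where "R = max (exp X.Kb) (exp Y.Kb)"
  have NN: "X.N w = Y.N w" for w
  proof -
    have a1: "AE u in X.N w. cmod u \<le> R" using X.N_props(3) by eventually_elim (simp add: R_def)
    have a2: "AE u in Y.N w. cmod u \<le> R" using Y.N_props(3) by eventually_elim (simp add: R_def)
    have mm: "integral\<^sup>L (X.N w) (\<lambda>u. cnj (u ^ n) * u ^ m) = integral\<^sup>L (Y.N w) (\<lambda>u. cnj (u ^ n) * u ^ m)" for n m
      by (simp only: X.N_moment Y.N_moment ee)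
    interpret tm: twomeas "X.N w" "Y.N w" R
      by (rule twomeas.intro[OF X.N_props(1) Y.N_props(1) X.N_props(2) Y.N_props(2) a1 a2 mm])
    show ?thesis by (rule tm.meas_eq)
  qed
  define RHS where "RHS v = (\<Sum>k\<in>{k0..k1}. cS k *\<^sub>C (E_X (Ss k) v - E_Y (Ss k) v) + cL k *\<^sub>C (E_X (Ls k) v - E_Y (Ls k) v))" for v
  define Dl where "Dl v = X v - Y v - RHS v" for v
  have linD: "is_clinear Dl"
  proof -
    have "is_clinear RHS" unfolding RHS_def
      by (intro clin_sum_fun clin_add_fun clin_scale_fun clin_diff_fun X.E_lin Y.E_lin Ss_borel Ls_borel)
    then show ?thesis unfolding Dl_def using X.linT Y.linT by (intro clin_diff_fun)
  qed
  have "cinner w (Dl w) = 0" for w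
  proof -
    have qX: "cinner w (X w) - (\<Sum>k\<in>{k0..k1}. cS k * complex_of_real ((norm (E_X (Ss k) w))\<^sup>2) + cL k * complex_of_real ((norm (E_X (Ls k) w))\<^sup>2))
       = integral\<^sup>L (X.N w) phi" using X.qform[OF sX, of w] by (simp add: X.N_int[OF phi_meas])
    have qY: "cinner w (Y w) - (\<Sum>k\<in>{k0..k1}. cS k * complex_of_real ((norm (E_Y (Ss k) w))\<^sup>2) + cL k * complex_of_real ((norm (E_Y (Ls k) w))\<^sup>2))
       = integral\<^sup>L (Y.N w) phi" using Y.qform[OF sY, of w] by (simp add: Y.N_int[OF phi_meas])
    have cR: "cinner w (RHS w) = (\<Sum>k\<in>{k0..k1}. cS k * complex_of_real ((norm (E_X (Ss k) w))\<^sup>2) + cL k * complex_of_real ((norm (E_X (Ls k) w))\<^sup>2))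
        - (\<Sum>k\<in>{k0..k1}. cS k * complex_of_real ((norm (E_Y (Ss k) w))\<^sup>2) + cL k * complex_of_real ((norm (E_Y (Ls k) w))\<^sup>2))"
      unfolding RHS_def
      by (simp add: cinner_sum_right cinner_add_right cinner_scaleC_right cinner_diff_right
          X.E_quad Y.E_quad Ss_borel Ls_borel sum_subtractf[symmetric] algebra_simps)
    have ar: "a - s1 = i1 \<Longrightarrow> b - s2 = i2 \<Longrightarrow> i1 = i2 \<Longrightarrow> r = s1 - s2 \<Longrightarrow> a - b - r = (0::complex)"
      for a b r s1 s2 i1 i2 by (simp add: algebra_simps)
    have "cinner w (Dl w) = cinner w (X w) - cinner w (Y w) - cinner w (RHS w)"
      unfolding Dl_def by (simp only: cinner_diff_right)
    also have "\<dots> = 0" by (rule ar[OF qX qY _ cR]) (simp add: NN)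
    finally show ?thesis .
  qed
  then have "Dl v = 0" using quad_zero[OF linD] by blast
  then show ?thesis by (simp add: Dl_def RHS_def)
qed


theorem theorem4p1:
  fixes X Y :: "'h::chilbert_space \<Rightarrow> 'h"
    and E_X E_Y :: "complex set \<Rightarrow> 'h \<Rightarrow> 'h"
    and k0 k1 :: int
  assumes "is_normal_op X" and "is_normal_op Y"
    and "op_exp X = op_exp Y"
    and "spectral_measure_of X E_X" and "spectral_measure_of Y E_Y"
    and "op_spectrum X \<subseteq> {z. (2 * of_int k0 + 1) * pi \<le> Im z \<and> Im z \<le> (2 * of_int k1 + 1) * pi}"
    and "op_spectrum Y \<subseteq> {z. (2 * of_int k0 + 1) * pi \<le> Im z \<and> Im z \<le> (2 * of_int k1 + 1) * pi}"
  shows "(\<lambda>v. X v - Y v) =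
    (\<lambda>v. \<Sum>k\<in>{k0..k1}.
       (complex_of_real (2 * of_int k * pi) * \<i>) *\<^sub>C
         (E_X {z. (2 * of_int k - 1) * pi < Im z \<and> Im z < (2 * of_int k + 1) * pi} v
          - E_Y {z. (2 * of_int k - 1) * pi < Im z \<and> Im z < (2 * of_int k + 1) * pi} v)
     + (complex_of_real ((2 * of_int k + 1) * pi) * \<i>) *\<^sub>C
         (E_X {z. Im z = (2 * of_int k + 1) * pi} v - E_Y {z. Im z = (2 * of_int k + 1) * pi} v))"
proof (rule ext)
  fix v
  show "X v - Y v = (\<Sum>k\<in>{k0..k1}.
       (complex_of_real (2 * of_int k * pi) * \<i>) *\<^sub>C
         (E_X {z. (2 * of_int k - 1) * pi < Im z \<and> Im z < (2 * of_int k + 1) * pi} v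
          - E_Y {z. (2 * of_int k - 1) * pi < Im z \<and> Im z < (2 * of_int k + 1) * pi} v)
     + (complex_of_real ((2 * of_int k + 1) * pi) * \<i>) *\<^sub>C
         (E_X {z. Im z = (2 * of_int k + 1) * pi} v - E_Y {z. Im z = (2 * of_int k + 1) * pi} v))"
    using main[OF assms, of v] unfolding Ss_def Ls_def cS_def cL_def .
qed

end
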